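(* Fix an integer $k>0$. In the two-type population dependent branching process with parameters $p\in(0,1]$, $q\in[0,1]$, let $n_{k,A}(t)$ be the number of type $A$ individuals with exactly $k$ offspring at time $t$ and $n(t)=n_A(t)+n_B(t)$. Then $n_{k,A}(t)/n(t)\to p_{k,A}$ in probability as $t\to\infty$, where $$p_{k,A}=p\int_0^\infty\mathbb{P}(\mathrm{Poisson}(r_A^*s)=k)e^{-s}\,ds=\frac{p}{1+r_A^*}\left(\frac{r_A^*}{1+r_A^*}\right)^k,\qquad r_A^*=q+\frac{(1-p)(1-q)}{p}.$$ Consequently, for the two-type CMRT $\{\mathcal{T}_n\}_{n\ge2}$ with the same parameters, if $N_{k,A}(n)$ denotes the number of type $A$ vertices of out-degree $k$ in $\mathcal{T}_n$, then $N_{k,A}(n)/n\to p_{k,A}$ in probability as $n\to\infty$.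
   Context: Population dependent branching process: a continuous-time Markov process started at time $0$ with two individuals, one of type $A$ and one of type $B$; individuals live forever. Let $n_A(t), n_B(t)$ be the numbers of type $A$, $B$ individuals at time $t$ ($n_A(0)=n_B(0)=1$). At time $t$, each type $A$ individual gives birth to type $A$ individuals at rate $q$ and to type $B$ individuals at rate $(1-p)(1-q)/p$; each type $B$ individual gives birth to type $A$ individuals at rate $\frac{n_A(t)}{n_B(t)}(1-q)$ and to type $B$ individuals at rate $\frac{n_A(t)}{n_B(t)}\cdot\frac{q(1-p)}{p}$. Two-type CMRT with parameters $p,q$: $\mathcal{T}_2$ consists of vertex $1$ of type $A$ and vertex $2$ of type $B$ joined by an edge. For $n\ge 3$, $\mathcal{T}_n$ is obtained from $\mathcal{T}_{n-1}$ by adding vertex $n$: (1) it is of type $A$ with probability $p$ and of type $B$ otherwise; (2) with probability $q$ it decides to connect to a vertex of its own type, otherwise to a vertex of the other type; (3) it connects by an edge to a uniformly random existing vertex of the selected type. All choices independent. Out-degree of a vertex = number of children (later vertices attached to it). *)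

theory Defs
  imports "HOL-Probability.Probability"
begin

text \<open>A two-type CMRT is stored as a list of vertices; entry i (0-based, i.e. paper vertex i+1)
  is a pair (is_type_A, parent).  The two initial vertices have no parent; every later vertex
  records the existing vertex it connected to.\<close>
type_synonym cmrt = "(bool \<times> nat option) list"

text \<open>Randomness for one step: (new vertex is of type A, connects to own type,
  uniform number in [0,1) selecting the target vertex, Exp(1) variable for the holding time).\<close>
type_synonym step_rand = "bool \<times> bool \<times> real \<times> real"

definition step_measure :: "real \<Rightarrow> real \<Rightarrow> step_rand measure" where
  "step_measure p q =
     measure_pmf (bernoulli_pmf p) \<Otimes>\<^sub>M (measure_pmf (bernoulli_pmf q) \<Otimes>\<^sub>M
       (uniform_measure lborel {0..<1} \<Otimes>\<^sub>M density lborel (exponential_density 1)))"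

definition cmrt_space :: "real \<Rightarrow> real \<Rightarrow> (nat \<Rightarrow> step_rand) measure" where
  "cmrt_space p q = PiM UNIV (\<lambda>_::nat. step_measure p q)"

definition cmrt_init :: cmrt where
  "cmrt_init = [(True, None), (False, None)]"

definition cmrt_add :: "cmrt \<Rightarrow> step_rand \<Rightarrow> cmrt" where
  "cmrt_add T r = (case r of (a, s, u, e) \<Rightarrow>
     (let tgt = (if s then a else \<not> a);
          cs = filter (\<lambda>i. fst (T ! i) = tgt) [0..<length T]
      in T @ [(a, Some (cs ! nat \<lfloor>u * real (length cs)\<rfloor>))]))"

text \<open>cmrt_seq w m is the tree with m+2 vertices.\<close>
fun cmrt_seq :: "(nat \<Rightarrow> step_rand) \<Rightarrow> nat \<Rightarrow> cmrt" where
  "cmrt_seq w 0 = cmrt_init"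
| "cmrt_seq w (Suc m) = cmrt_add (cmrt_seq w m) (w m)"

text \<open>The paper's T_n (n \<ge> 2), with n vertices.\<close>
definition cmrt_tree :: "(nat \<Rightarrow> step_rand) \<Rightarrow> nat \<Rightarrow> cmrt" where
  "cmrt_tree w n = cmrt_seq w (n - 2)"

definition num_A :: "cmrt \<Rightarrow> nat" where
  "num_A T = length (filter fst T)"

definition outdeg :: "cmrt \<Rightarrow> nat \<Rightarrow> nat" where
  "outdeg T v = card {j. j < length T \<and> snd (T ! j) = Some v}"

definition NkA :: "nat \<Rightarrow> cmrt \<Rightarrow> nat" where
  "NkA k T = card {v. v < length T \<and> fst (T ! v) \<and> outdeg T v = k}"

text \<open>In a state with n_A type A
  individuals the total birth rate is n_A/p (sum of the four rates in the model), and the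
  embedded jump chain is exactly the CMRT; the holding time is p*E/n_A with E ~ Exp(1).\<close>
definition hold :: "real \<Rightarrow> (nat \<Rightarrow> step_rand) \<Rightarrow> nat \<Rightarrow> real" where
  "hold p w m = p * snd (snd (snd (w m))) / real (num_A (cmrt_seq w m))"

definition jump_time :: "real \<Rightarrow> (nat \<Rightarrow> step_rand) \<Rightarrow> nat \<Rightarrow> real" where
  "jump_time p w m = (\<Sum>j<m. hold p w j)"

definition bp_state :: "real \<Rightarrow> (nat \<Rightarrow> step_rand) \<Rightarrow> real \<Rightarrow> cmrt" where
  "bp_state p w t = cmrt_seq w (LEAST m. t < jump_time p w (Suc m))"

definition poisson_prob :: "real \<Rightarrow> nat \<Rightarrow> real" where
  "poisson_prob lam k = lam ^ k / fact k * exp (- lam)"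

end

theory Submission
  imports Defs "HOL-Library.Discrete_Functions" "HOL-Analysis.Summation_Tests"
begin

lemma sq_le: "\<bar>x::real\<bar> \<le> b \<Longrightarrow> x^2 \<le> b^2"
  by (metis abs_ge_zero power2_abs power_mono)

lemma tele_bound:
  fixes s :: "nat \<Rightarrow> real"
  assumes "\<And>m. \<bar>s (Suc m) - s m\<bar> \<le> B"
  shows "\<bar>s (a + d) - s a\<bar> \<le> B * d"
proof (induction d)
  case 0 then show ?case by simp
next
  case (Suc d)
  have "\<bar>s (a + Suc d) - s a\<bar> \<le> \<bar>s (Suc (a + d)) - s (a + d)\<bar> + \<bar>s (a + d) - s a\<bar>" by simp
  also have "\<dots> \<le> B + B * d" using assms[of "a+d"] Suc by linarith
  finally show ?case by (simp add: algebra_simps)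
qed

lemma det_slln:
  fixes s :: "nat \<Rightarrow> real"
  assumes inc: "\<And>m. \<bar>s (Suc m) - s m\<bar> \<le> B"
    and ev: "\<And>e::nat. eventually (\<lambda>n. \<bar>s (n^2)\<bar> < real (n^2) / Suc e) sequentially"
  shows "(\<lambda>m. s m / m) \<longlonglongrightarrow> 0"
proof (rule LIMSEQ_I)
  fix r :: real assume r: "0 < r"
  have B0: "0 \<le> B" using inc[of 0] by linarith
  obtain n0 :: nat where n0: "0 < n0" "inverse (real n0) < r / 2"
    using ex_inverse_of_nat_less[of "r/2"] r by auto
  define e where "e = n0 - 1"
  have "Suc e = n0" using n0 unfolding e_def by simp
  then have e: "1 / real (Suc e) < r / 2" using n0 by (simp add: inverse_eq_divide)
  obtain N where N: "\<And>n. n \<ge> N \<Longrightarrow> \<bar>s (n^2)\<bar> < real (n^2) / Suc e"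
    using ev[of e] unfolding eventually_sequentially by blast
  obtain K :: nat where K: "4 * B / r < K" using reals_Archimedean2 by blast
  show "\<exists>no. \<forall>m\<ge>no. norm (s m / m - 0) < r"
  proof (intro exI allI impI)
    fix m assume m: "m \<ge> (Suc (max N K))^2"
    define n where "n = floor_sqrt m"
    have n1: "n^2 \<le> m" unfolding n_def by simp
    have n2: "m < (Suc n)^2" unfolding n_def by (rule Suc_floor_sqrt_power2_gt)
    have nN: "Suc (max N K) \<le> n" unfolding n_def using m by (simp add: le_floor_sqrtI)
    then have npos: "0 < n" by simp
    have d: "m - n^2 \<le> 2 * n" using n2 by (simp add: power2_eq_square)
    have "\<bar>s m - s (n^2)\<bar> \<le> B * (m - n^2)"
      using tele_bound[of s B "n^2" "m - n^2", OF inc] n1 by simp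
    also have "\<dots> \<le> B * (2 * n)" using d B0 by (intro mult_left_mono) (simp_all add: of_nat_diff)
    finally have a1: "\<bar>s m\<bar> < real (n^2) / Suc e + B * (2 * n)" using N[of n] nN by linarith
    have "real (n^2) \<le> real m" using n1 by linarith
    then have mpos: "real n^2 \<le> real m" by simp
    have np: "(0::real) < real n^2" using npos by simp
    have "\<bar>s m / m\<bar> = \<bar>s m\<bar> / m" by simp
    also have "\<dots> \<le> \<bar>s m\<bar> / real n^2" proof (rule divide_left_mono)
      show "0 < real m * real n^2" using mpos np by (intro mult_pos_pos) linarith+
    qed (use mpos in auto)
    also have "\<dots> < (real (n^2) / Suc e + B * (2 * n)) / real n^2"
      using a1 np by (intro divide_strict_right_mono) auto
    also have "\<dots> = 1 / Suc e + 2 * B / n"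
    proof -
      have nn: "real n \<noteq> 0" using npos by simp
      have "(real (n^2) / Suc e + B * (2 * n)) / real n^2 = (real (n^2) / Suc e) / real n^2 + (B * (2 * n)) / real n^2"
        by (rule add_divide_distrib)
      also have "(real (n^2) / Suc e) / real n^2 = 1 / Suc e" using nn by simp
      also have "(B * (2 * n)) / real n^2 = 2 * B / n" using nn by (simp add: power2_eq_square)
      finally show ?thesis .
    qed
    also have "2 * B / n \<le> r / 2"
    proof -
      have "real K < n" using nN by simp
      then have "4 * B / r < n" using K by linarith
      then show ?thesis using r npos B0 by (simp add: field_simps)
    qed
    then have "1 / Suc e + 2 * B / n < r" using e by linarith
    finally show "norm (s m / m - 0) < r" by simp
  qed
qed


lemma stoch_approx:
  fixes a al be :: "nat \<Rightarrow> real"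
  assumes rec: "\<And>m. m \<ge> M \<Longrightarrow> a (Suc m) = (1 - al m) * a m + al m * be m"
    and al: "\<And>m. m \<ge> M \<Longrightarrow> 1 / (real m + 1) \<le> al m \<and> al m \<le> 1"
    and be: "be \<longlonglongrightarrow> b"
  shows "a \<longlonglongrightarrow> b"
proof (rule LIMSEQ_I)
  fix r :: real assume r: "0 < r"
  define eps where "eps = r / 2"
  have eps: "0 < eps" using r by (simp add: eps_def)
  obtain M0 where M0: "\<And>m. m \<ge> M0 \<Longrightarrow> norm (be m - b) < eps"
    using LIMSEQ_D[OF be eps] by blast
  define M1 where "M1 = max (max M M0) 1"
  have M1: "M \<le> M1" "M0 \<le> M1" "1 \<le> M1" unfolding M1_def by auto
  define K where "K = \<bar>a M1 - b\<bar> * M1"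
  have K0: "0 \<le> K" unfolding K_def by simp
  have claim: "\<bar>a (M1 + d) - b\<bar> \<le> eps + K / real (M1 + d)" for d
  proof (induction d)
    case 0
    have "K / real M1 = \<bar>a M1 - b\<bar>" unfolding K_def using M1 by simp
    then show ?case using eps by simp
  next
    case (Suc d)
    define m where "m = M1 + d"
    have mM: "M \<le> m" "M0 \<le> m" "1 \<le> m" using M1 unfolding m_def by auto
    have IH: "\<bar>a m - b\<bar> \<le> eps + K / real m" using Suc unfolding m_def .
    have alm: "1 / (real m + 1) \<le> al m" "al m \<le> 1" using al[OF mM(1)] by auto
    have bem: "\<bar>be m - b\<bar> \<le> eps" using M0[OF mM(2)] by simp
    have al0: "0 \<le> al m" "0 \<le> 1 - al m" using alm
      by (smt (verit) divide_nonneg_nonneg of_nat_0_le_iff)+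
    have eq: "a (Suc m) - b = (1 - al m) * (a m - b) + al m * (be m - b)"
      using rec[OF mM(1)] by (simp add: algebra_simps)
    have "\<bar>a (Suc m) - b\<bar> \<le> \<bar>(1 - al m) * (a m - b)\<bar> + \<bar>al m * (be m - b)\<bar>"
      unfolding eq by (rule abs_triangle_ineq)
    also have "\<dots> = (1 - al m) * \<bar>a m - b\<bar> + al m * \<bar>be m - b\<bar>"
      using al0 by (simp add: abs_mult)
    also have "\<dots> \<le> (1 - al m) * (eps + K / real m) + al m * eps"
      by (intro add_mono mult_left_mono IH bem al0)
    also have "\<dots> = eps + (1 - al m) * (K / real m)" by (simp add: algebra_simps)
    also have "(1 - al m) * (K / real m) \<le> (real m / (real m + 1)) * (K / real m)"
    proof (rule mult_right_mono)
      have "1 - al m \<le> 1 - 1 / (real m + 1)" using alm by simp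
      also have "\<dots> = real m / (real m + 1)" by (simp add: field_simps)
      finally show "1 - al m \<le> real m / (real m + 1)" .
    qed (use K0 in simp)
    also have "(real m / (real m + 1)) * (K / real m) = K / real (M1 + Suc d)"
    proof -
      have "real m \<noteq> 0" using mM by simp
      moreover have "real (M1 + Suc d) = real m + 1" unfolding m_def by simp
      ultimately show ?thesis by simp
    qed
    finally show ?case by (simp add: m_def)
  qed
  obtain N :: nat where N: "K / eps < N" using reals_Archimedean2 by blast
  show "\<exists>no. \<forall>n\<ge>no. norm (a n - b) < r"
  proof (intro exI allI impI)
    fix n assume n: "n \<ge> M1 + N + 1"
    have npos: "0 < real n" using n by simp
    have "K / eps < n" using N n by linarith
    then have Kn: "K / real n < eps" using eps npos by (simp add: field_simps)
    have "\<bar>a (M1 + (n - M1)) - b\<bar> \<le> eps + K / real (M1 + (n - M1))" by (rule claim)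
    then have "\<bar>a n - b\<bar> \<le> eps + K / real n" using n by simp
    then show "norm (a n - b) < r" using Kn unfolding eps_def real_norm_def by linarith
  qed
qed

lemma level_limit:
  fixes z y N S :: "nat \<Rightarrow> real" and rho c p ys :: real
  assumes rec: "\<And>m. z (Suc m) = z m + c + rho * (y m - z m) / N m + (S (Suc m) - S m)"
    and N1: "\<And>m. 1 \<le> N m" and rho: "0 \<le> rho" "rho \<le> 1" and p: "0 < p"
    and lN: "(\<lambda>m. N m / m) \<longlonglongrightarrow> p" and ly: "(\<lambda>m. y m / m) \<longlonglongrightarrow> ys"
    and lS: "(\<lambda>m. S m / m) \<longlonglongrightarrow> 0"
  shows "(\<lambda>m. z m / m) \<longlonglongrightarrow> (c + rho / p * ys) / (1 + rho / p)"
proof -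
  define w where "w m = z m - S m" for m
  define a where "a m = w m / m" for m
  define iN where "iN m = real m / N m" for m
  define al where "al m = (1 + rho * iN m) / (real m + 1)" for m
  define be where "be m = (c + rho * (((y m - S m) / m) * iN m)) / (1 + rho * iN m)" for m
  have Npos: "0 < N m" for m using N1[of m] by linarith
  have iN0: "0 \<le> iN m" for m unfolding iN_def using Npos[of m] by simp
  have iN_lim: "iN \<longlonglongrightarrow> 1 / p"
  proof -
    have "(\<lambda>m. inverse (N m / m)) \<longlonglongrightarrow> inverse p" using lN p by (intro tendsto_inverse) auto
    moreover have "inverse (N m / m) = iN m" for m unfolding iN_def by simp
    ultimately show ?thesis by (simp add: inverse_eq_divide)
  qed
  have be_lim: "be \<longlonglongrightarrow> (c + rho * ((ys - 0) * (1 / p))) / (1 + rho * (1 / p))"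
  proof -
    have lyS: "(\<lambda>m. (y m - S m) / m) \<longlonglongrightarrow> ys - 0"
      unfolding diff_divide_distrib by (intro tendsto_diff ly lS)
    have "0 \<le> rho / p" using p rho by simp
    then have nz: "1 + rho * (1 / p) \<noteq> 0" by simp
    show ?thesis unfolding be_def
      by (intro tendsto_divide tendsto_add tendsto_mult tendsto_const lyS iN_lim nz)
  qed
  have a_lim: "a \<longlonglongrightarrow> (c + rho * ((ys - 0) * (1 / p))) / (1 + rho * (1 / p))"
  proof (rule stoch_approx[where M=1 and al=al and be=be])
    fix m :: nat assume m: "1 \<le> m"
    have mpos: "0 < real m" using m by simp
    have d: "0 < 1 + rho * iN m" using iN0[of m] rho by (simp add: add_pos_nonneg)
    show "1 / (real m + 1) \<le> al m \<and> al m \<le> 1"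
    proof
      show "1 / (real m + 1) \<le> al m" unfolding al_def using iN0[of m] rho
        by (intro divide_right_mono) auto
      have iNle: "iN m \<le> real m / 1" unfolding iN_def
        by (rule divide_left_mono) (use N1[of m] Npos[of m] in auto)
      have "rho * iN m \<le> 1 * real m"
        by (rule mult_mono) (use rho iNle iN0[of m] in auto)
      then show "al m \<le> 1" unfolding al_def by simp
    qed
    have wS: "w (Suc m) = w m + c + rho * (y m - S m - w m) / N m"
      unfolding w_def using rec[of m] by (simp add: algebra_simps)
    have e1: "a m * real m = w m" unfolding a_def using mpos by simp
    have e2: "((y m - S m) / m) * iN m = (y m - S m) / N m" unfolding iN_def using mpos by simp
    have e3: "rho * iN m = rho * real m / N m" unfolding iN_def by simp
    have "(1 - al m) * a m + al m * be m
       = (a m * real m - a m * (rho * iN m) + (c + rho * (((y m - S m) / m) * iN m))) / (real m + 1)"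
    proof -
      define D where "D = 1 + rho * iN m"
      define X where "X = c + rho * (((y m - S m) / m) * iN m)"
      define q where "q = real m + 1"
      have q0: "q \<noteq> 0" unfolding q_def using mpos by simp
      have D0: "D \<noteq> 0" unfolding D_def using d by simp
      have 1: "(D / q) * (X / D) = X / q" using D0 by simp
      have 2: "(1 - D / q) * a m = (a m * real m - a m * (rho * iN m)) / q"
        using q0 unfolding D_def q_def by (simp add: field_simps)
      have "(1 - al m) * a m + al m * be m = (1 - D / q) * a m + (D / q) * (X / D)"
        unfolding al_def be_def D_def X_def q_def ..
      also have "\<dots> = (a m * real m - a m * (rho * iN m) + X) / q" unfolding 1 2 by (simp add: add_divide_distrib)
      finally show ?thesis unfolding X_def q_def .
    qed
    also have "\<dots> = (w m + c + rho * (y m - S m - w m) / N m) / (real m + 1)"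
    proof -
      have Nz: "N m \<noteq> 0" using Npos[of m] by simp
      have "a m * real m - a m * (rho * real m / N m) + (c + rho * ((y m - S m) / N m))
          = w m + c + rho * (y m - S m - w m) / N m"
        unfolding e1[symmetric] using Nz by (simp add: field_simps)
      then show ?thesis unfolding e2 e3 by simp
    qed
    also have "\<dots> = a (Suc m)" unfolding a_def wS by simp
    finally show "a (Suc m) = (1 - al m) * a m + al m * be m" ..
  qed (rule be_lim)
  have "(\<lambda>m. a m + S m / m) \<longlonglongrightarrow> (c + rho * ((ys - 0) * (1 / p))) / (1 + rho * (1 / p)) + 0"
    by (intro tendsto_add a_lim lS)
  moreover have "a m + S m / m = z m / m" for m unfolding a_def w_def by (simp add: diff_divide_distrib)
  ultimately show ?thesis by simp
qed

context sequence_space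
begin

lemma fun_upd_meas[measurable]:
  assumes "w \<in> space S"
  shows "(\<lambda>x. w(j := x)) \<in> measurable M S"
  using assms
  by (intro measurable_PiM_single') (auto simp: space_PiM PiE_iff)

lemma fun_upd_meas2[measurable]:
  "(\<lambda>x. (fst x)(j := snd x)) \<in> measurable (S \<Otimes>\<^sub>M M) S"
proof (rule measurable_PiM_single')
  fix i :: nat
  show "(\<lambda>x. ((fst x)(j := snd x)) i) \<in> measurable (S \<Otimes>\<^sub>M M) M"
    by (cases "i = j") auto
qed (auto simp: space_PiM PiE_iff space_pair_measure)

lemma integral_comp0:
  assumes [measurable]: "f \<in> borel_measurable M"
  shows "(\<integral>w'. f (w' 0) \<partial>S) = (\<integral>x. (f x::real) \<partial>M)"
proof -
  have "(\<integral>x. f x \<partial>M) = (\<integral>x. f x \<partial>distr S M (\<lambda>w. w 0))"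
    using PiM_component[of 0] by simp
  also have "\<dots> = (\<integral>w'. f (w' 0) \<partial>S)"
    by (subst integral_distr) auto
  finally show ?thesis ..
qed

lemma orth:
  fixes g h :: "(nat \<Rightarrow> 'a) \<Rightarrow> real"
  assumes gm[measurable]: "g \<in> borel_measurable S" and gb: "\<And>w. \<bar>g w\<bar> \<le> B"
    and gd: "\<And>w w'. (\<forall>l<j. w l = w' l) \<Longrightarrow> g w = g w'"
  and hm[measurable]: "h \<in> borel_measurable S" and hb: "\<And>w. \<bar>h w\<bar> \<le> B"
    and hd: "\<And>w w'. (\<forall>l\<le>j. w l = w' l) \<Longrightarrow> h w = h w'"
  and z: "AE w in S. (\<integral>x. h (w(j := x)) \<partial>M) = 0"
  shows "(\<integral>w. g w * h w \<partial>S) = 0"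
proof -
  interpret PP: pair_prob_space S S ..
  let ?c = "\<lambda>(w, w'). comb_seq j w w'"
  have cm[measurable]: "?c \<in> measurable (S \<Otimes>\<^sub>M S) S" by (rule measurable_comb_seq)
  have "(\<integral>w. g w * h w \<partial>S) = (\<integral>w. g w * h w \<partial>distr (S \<Otimes>\<^sub>M S) S ?c)"
    using PiM_comb_seq[of j] by simp
  also have "\<dots> = (\<integral>x. g (?c x) * h (?c x) \<partial>(S \<Otimes>\<^sub>M S))"
    by (subst integral_distr) auto
  also have "\<dots> = (\<integral>w. (\<integral>w'. g (?c (w,w')) * h (?c (w,w')) \<partial>S) \<partial>S)"
  proof (rule PP.integral_fst'[symmetric])
    show "integrable (S \<Otimes>\<^sub>M S) (\<lambda>x. g (?c x) * h (?c x))"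
    proof (rule PP.integrable_const_bound[where B="B*B"])
      show "AE x in S \<Otimes>\<^sub>M S. norm (g (?c x) * h (?c x)) \<le> B * B"
        using gb hb by (intro AE_I2) (simp add: abs_mult mult_mono')
    qed measurable
  qed
  also have "\<dots> = (\<integral>w. g w * (\<integral>x. h (w(j := x)) \<partial>M) \<partial>S)"
  proof (rule integral_cong_AE)
    show "AE w in S. (\<integral>w'. g (?c (w,w')) * h (?c (w,w')) \<partial>S) = g w * (\<integral>x. h (w(j := x)) \<partial>M)"
    proof (rule AE_I2)
      fix w assume w: "w \<in> space S"
      have e1: "g (?c (w,w')) = g w" for w'
        by (rule gd) (auto simp: comb_seq_less)
      have e2: "h (?c (w,w')) = h (w(j := w' 0))" for w'
        by (rule hd) (auto simp: comb_seq_def)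
      have hm2[measurable]: "(\<lambda>x. h (w(j := x))) \<in> borel_measurable M"
        using fun_upd_meas[OF w] by measurable
      show "(\<integral>w'. g (?c (w,w')) * h (?c (w,w')) \<partial>S) = g w * (\<integral>x. h (w(j := x)) \<partial>M)"
        unfolding e1 e2 by (simp add: integral_comp0[OF hm2])
    qed
  qed measurable
  also have "\<dots> = (\<integral>w. 0 \<partial>S)"
    by (rule integral_cong_AE) (use z in auto)
  finally show ?thesis by simp
qed

lemma sum_sq:
  fixes g :: "nat \<Rightarrow> (nat \<Rightarrow> 'a) \<Rightarrow> real"
  assumes gm[measurable]: "\<And>j. g j \<in> borel_measurable S" and gb: "\<And>j w. \<bar>g j w\<bar> \<le> B"
    and gd: "\<And>j w w'. (\<forall>l\<le>j. w l = w' l) \<Longrightarrow> g j w = g j w'"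
    and z: "\<And>j. AE w in S. (\<integral>x. g j (w(j := x)) \<partial>M) = 0"
  shows "(\<integral>w. (\<Sum>j<m. g j w)^2 \<partial>S) \<le> m * B^2"
proof (induction m)
  case 0 then show ?case by simp
next
  case (Suc m)
  have B0: "0 \<le> B" using gb[of 0 undefined] by linarith
  let ?s = "\<lambda>w. \<Sum>j<m. g j w"
  have sb: "\<bar>?s w\<bar> \<le> m * B" for w
  proof -
    have "\<bar>?s w\<bar> \<le> (\<Sum>j<m. \<bar>g j w\<bar>)" by (rule sum_abs)
    also have "\<dots> \<le> (\<Sum>j<m. B)" by (intro sum_mono gb)
    finally show ?thesis by simp
  qed
  have sb': "\<bar>?s w\<bar> \<le> m * B + B" for w using sb[of w] B0 by linarith
  have gb': "\<bar>g m w\<bar> \<le> m * B + B" for w using gb[of m w] B0 by (simp add: mult_nonneg_nonneg add_increasing)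
  have o: "(\<integral>w. ?s w * g m w \<partial>S) = 0"
  proof (rule orth[where B="m*B+B"])
    show "\<And>w w'. \<forall>l<m. w l = w' l \<Longrightarrow> ?s w = ?s w'"
      by (intro sum.cong refl gd) auto
    show "?s \<in> borel_measurable S" by measurable
    show "g m \<in> borel_measurable S" by measurable
    show "\<And>w. \<bar>?s w\<bar> \<le> m * B + B" by (rule sb')
    show "\<And>w. \<bar>g m w\<bar> \<le> m * B + B" by (rule gb')
    show "\<And>w w'. \<forall>l\<le>m. w l = w' l \<Longrightarrow> g m w = g m w'" by (rule gd)
    show "AE w in S. (\<integral>x. g m (w(m := x)) \<partial>M) = 0" by (rule z)
  qed
  have int1: "integrable S (\<lambda>w. (?s w)^2)"
  proof (rule integrable_const_bound[where B="(m*B)^2"])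
    show "AE x in S. norm ((?s x)^2) \<le> (m*B)^2" using sb by (simp add: sq_le)
  qed measurable
  have int2: "integrable S (\<lambda>w. ?s w * g m w)"
  proof (rule integrable_const_bound[where B="(m*B+B)*(m*B+B)"])
    show "AE x in S. norm (?s x * g m x) \<le> (m*B+B)*(m*B+B)"
      using sb' gb' by (intro AE_I2) (simp add: abs_mult mult_mono')
  qed simp
  have int3: "integrable S (\<lambda>w. (g m w)^2)"
  proof (rule integrable_const_bound[where B="B^2"])
    show "AE x in S. norm ((g m x)^2) \<le> B^2" using gb by (simp add: sq_le)
  qed measurable
  have "(\<integral>w. (\<Sum>j<Suc m. g j w)^2 \<partial>S) = (\<integral>w. (?s w)^2 + 2 * (?s w * g m w) + (g m w)^2 \<partial>S)"
    by (rule arg_cong[where f="integral\<^sup>L S"]) (simp add: fun_eq_iff power2_sum algebra_simps)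
  also have "\<dots> = (\<integral>w. (?s w)^2 \<partial>S) + 2 * (\<integral>w. ?s w * g m w \<partial>S) + (\<integral>w. (g m w)^2 \<partial>S)"
    using int1 int2 int3 by simp
  also have "(\<integral>w. (g m w)^2 \<partial>S) \<le> B^2"
  proof -
    have "(\<integral>w. (g m w)^2 \<partial>S) \<le> (\<integral>w. B^2 \<partial>S)"
      by (intro integral_mono int3 sq_le gb) simp
    then show ?thesis by (simp add: P.prob_space)
  qed
  finally show ?case using Suc o by (simp add: algebra_simps)
qed


lemma mart_slln:
  fixes g :: "nat \<Rightarrow> (nat \<Rightarrow> 'a) \<Rightarrow> real"
  assumes gm[measurable]: "\<And>j. g j \<in> borel_measurable S" and gb: "\<And>j w. \<bar>g j w\<bar> \<le> B"
    and gd: "\<And>j w w'. (\<forall>l\<le>j. w l = w' l) \<Longrightarrow> g j w = g j w'"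
    and z: "\<And>j. AE w in S. (\<integral>x. g j (w(j := x)) \<partial>M) = 0"
  shows "AE w in S. (\<lambda>m. (\<Sum>j<m. g j w) / m) \<longlonglongrightarrow> 0"
proof -
  have B0: "0 \<le> B" using gb[of 0 undefined] by linarith
  have ev: "AE w in S. eventually (\<lambda>n. \<bar>\<Sum>j<n^2. g j w\<bar> < real (n^2) / Suc e) sequentially" for e :: nat
  proof -
    define A where "A n = {w \<in> space S. real (n^2) / Suc e \<le> \<bar>\<Sum>j<n^2. g j w\<bar>}" for n
    have Am[measurable]: "A n \<in> sets S" for n unfolding A_def by measurable
    have mA: "measure S (A n) \<le> (B^2 * (Suc e)^2) * inverse (real n ^ 2)" if n1: "1 \<le> n" for n
    proof -
      let ?u = "\<lambda>w. (\<Sum>j<n^2. g j w)^2"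
      define c where "c = (real (n^2) / Suc e)^2"
      have cpos: "0 < c" unfolding c_def using n1 by simp
      have sb: "\<bar>\<Sum>j<n^2. g j w\<bar> \<le> real (n^2) * B" for w
      proof -
        have "\<bar>\<Sum>j<n^2. g j w\<bar> \<le> (\<Sum>j<n^2. \<bar>g j w\<bar>)" by (rule sum_abs)
        also have "\<dots> \<le> (\<Sum>j<n^2. B)" by (intro sum_mono gb)
        finally show ?thesis by simp
      qed
      have int: "integrable S ?u"
      proof (rule integrable_const_bound[where B="(real (n^2) * B)^2"])
        show "AE x in S. norm (?u x) \<le> (real (n^2) * B)^2" using sb by (simp add: sq_le)
      qed measurable
      have "A n \<subseteq> {x \<in> space S. c \<le> ?u x}"
      proof
        fix w assume "w \<in> A n"
        then have w: "w \<in> space S" "real (n^2) / Suc e \<le> \<bar>\<Sum>j<n^2. g j w\<bar>" unfolding A_def by auto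
        have "c \<le> \<bar>\<Sum>j<n^2. g j w\<bar>^2" unfolding c_def
          by (rule power_mono[OF w(2)]) simp
        then show "w \<in> {x \<in> space S. c \<le> ?u x}" using w by simp
      qed
      then have "measure S (A n) \<le> measure S {x \<in> space S. c \<le> ?u x}"
        by (intro finite_measure_mono) measurable
      also have "\<dots> \<le> (\<integral>x. ?u x \<partial>S) / c"
        by (rule integral_Markov_inequality_measure[OF int _ _ cpos]) auto
      also have "\<dots> \<le> (real (n^2) * B^2) / c"
        using sum_sq[OF gm gb gd z, of "n^2"] cpos by (intro divide_right_mono) auto
      also have "\<dots> = (B^2 * (Suc e)^2) * inverse (real n ^ 2)"
        unfolding c_def using n1 by (simp add: field_simps power2_eq_square)
      finally show ?thesis .
    qed
    have summ: "summable (\<lambda>n. measure S (A n))"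
    proof (rule summable_comparison_test')
      show "summable (\<lambda>n. (B^2 * (Suc e)^2) * inverse (real n ^ 2))"
        by (intro summable_mult inverse_power_summable) auto
      show "norm (measure S (A n)) \<le> (B^2 * (Suc e)^2) * inverse (real n ^ 2)" if "1 \<le> n" for n
        using mA[OF that] by simp
    qed
    have "AE w in S. eventually (\<lambda>n. w \<in> space S - A n) sequentially"
      by (rule borel_cantelli_AE1[OF Am _ summ]) (simp add: P.emeasure_eq_measure)
    then show ?thesis
      by (rule eventually_mono) (auto simp: A_def elim!: eventually_mono)
  qed
  then have "AE w in S. \<forall>e::nat. eventually (\<lambda>n. \<bar>\<Sum>j<n^2. g j w\<bar> < real (n^2) / Suc e) sequentially"
    by (simp add: AE_all_countable)
  then show ?thesis
  proof (rule eventually_mono)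
    fix w assume "\<forall>e::nat. eventually (\<lambda>n. \<bar>\<Sum>j<n^2. g j w\<bar> < real (n^2) / Suc e) sequentially"
    then show "(\<lambda>m. (\<Sum>j<m. g j w) / m) \<longlonglongrightarrow> 0"
      by (intro det_slln[where B=B]) (auto simp: gb)
  qed
qed

end

definition Alist :: "cmrt \<Rightarrow> nat list" where
  "Alist T = filter (\<lambda>i. fst (T ! i)) [0..<length T]"

definition Blist :: "cmrt \<Rightarrow> nat list" where
  "Blist T = filter (\<lambda>i. \<not> fst (T ! i)) [0..<length T]"

definition idx :: "real \<Rightarrow> nat \<Rightarrow> nat" where
  "idx u n = nat \<lfloor>u * real n\<rfloor>"

definition good :: "cmrt \<Rightarrow> bool" where
  "good T \<longleftrightarrow> 2 \<le> length T \<and> fst (T ! 0) \<and> \<not> fst (T ! 1) \<and>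
     (\<forall>j<length T. \<forall>v. snd (T ! j) = Some v \<longrightarrow> v < length T)"

lemma idx_less: "0 \<le> u \<Longrightarrow> u < 1 \<Longrightarrow> 0 < n \<Longrightarrow> idx u n < n"
proof -
  assume u: "0 \<le> u" "u < 1" and n: "0 < n"
  have "u * real n < real n" using u n by simp
  then have "\<lfloor>u * real n\<rfloor> < int n" by (simp add: floor_less_iff)
  moreover have "0 \<le> \<lfloor>u * real n\<rfloor>" using u by simp
  ultimately show ?thesis unfolding idx_def by (simp add: nat_less_iff)
qed

lemma cmrt_add_eq:
  "cmrt_add T (a, s, u, e) = T @ [(a, Some (if s = a then Alist T ! idx u (length (Alist T))
      else Blist T ! idx u (length (Blist T))))]"
  unfolding cmrt_add_def Alist_def Blist_def idx_def Let_def by auto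

lemma length_cmrt_add: "length (cmrt_add T r) = Suc (length T)"
  by (cases r) (simp add: cmrt_add_eq)

lemma length_cmrt_seq: "length (cmrt_seq w m) = m + 2"
  by (induction m) (simp_all add: cmrt_init_def length_cmrt_add)

lemma num_A_cmrt_add: "num_A (cmrt_add T r) = num_A T + (if fst r then 1 else 0)"
  by (cases r) (simp add: cmrt_add_eq num_A_def)

lemma num_A_alt: "num_A T = card {x. x < length T \<and> fst (T ! x)}"
  unfolding num_A_def by (rule length_filter_conv_card)

lemma NkA_le_num_A: "NkA k T \<le> num_A T"
  unfolding NkA_def num_A_alt by (rule card_mono) auto

lemma outdeg_snoc: "outdeg (T @ [(a, Some v)]) x = outdeg T x + (if x = v then 1 else 0)"
proof -
  have "{j. j < length (T @ [(a, Some v)]) \<and> snd ((T @ [(a, Some v)]) ! j) = Some x}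
      = {j. j < length T \<and> snd (T ! j) = Some x} \<union> (if x = v then {length T} else {})"
    by (auto simp: nth_append less_Suc_eq)
  then show ?thesis unfolding outdeg_def by (auto simp: card_insert_if)
qed

lemma card_upd:
  fixes f :: "nat \<Rightarrow> nat"
  shows "real (card {x. x < n \<and> P x \<and> f x + (if x = v then 1 else 0) = k})
    = real (card {x. x < n \<and> P x \<and> f x = k}) + (if v < n \<and> P v \<and> f v + 1 = k then 1 else 0)
      - (if v < n \<and> P v \<and> f v = k then 1 else 0)"
proof -
  define C where "C = {x. x < n \<and> P x \<and> x \<noteq> v \<and> f x = k}"
  have fC: "finite C" unfolding C_def by simp
  have vC: "v \<notin> C" unfolding C_def by simp
  have e1: "{x. x < n \<and> P x \<and> f x + (if x = v then 1 else 0) = k}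
      = (if v < n \<and> P v \<and> f v + 1 = k then insert v C else C)"
    unfolding C_def by auto
  have e2: "{x. x < n \<and> P x \<and> f x = k} = (if v < n \<and> P v \<and> f v = k then insert v C else C)"
    unfolding C_def by auto
  show ?thesis unfolding e1 e2 using fC vC by (simp add: card_insert_disjoint)
qed

lemma NkA_snoc:
  "real (NkA k (T @ [(a, Some v)])) = real (NkA k T)
     + (if v < length T \<and> fst (T ! v) \<and> outdeg T v + 1 = k then 1 else 0)
     - (if v < length T \<and> fst (T ! v) \<and> outdeg T v = k then 1 else 0)
     + (if a \<and> outdeg T (length T) + (if length T = v then 1 else 0) = k then 1 else 0)"
proof -
  let ?T = "T @ [(a, Some v)]"
  have "{x. x < length ?T \<and> fst (?T ! x) \<and> outdeg ?T x = k}
     = {x. x < length T \<and> fst (T ! x) \<and> outdeg T x + (if x = v then 1 else 0) = k}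
       \<union> (if a \<and> outdeg T (length T) + (if length T = v then 1 else 0) = k then {length T} else {})"
    by (auto simp: outdeg_snoc nth_append less_Suc_eq)
  then have "NkA k ?T = card {x. x < length T \<and> fst (T ! x) \<and> outdeg T x + (if x = v then 1 else 0) = k}
      + (if a \<and> outdeg T (length T) + (if length T = v then 1 else 0) = k then 1 else 0)"
    unfolding NkA_def by (auto simp: card_insert_if)
  then show ?thesis unfolding NkA_def[of k T] using card_upd[of "length T" "\<lambda>x. fst (T ! x)" "outdeg T" v k]
    by simp
qed

lemma NkA_cmrt_add_bound: "\<bar>real (NkA k (cmrt_add T r)) - real (NkA k T)\<bar> \<le> 2"
proof -
  obtain a s u e where r: "r = (a, s, u, e)" by (cases r) auto
  obtain v where "cmrt_add T r = T @ [(a, Some v)]" unfolding r cmrt_add_eq by blast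
  then show ?thesis using NkA_snoc[of k T a v] by auto
qed

lemma good_init: "good cmrt_init"
  unfolding good_def cmrt_init_def by (auto simp: less_Suc_eq nth_Cons split: nat.splits)

lemma set_Alist: "set (Alist T) = {x. x < length T \<and> fst (T ! x)}"
  unfolding Alist_def by auto

lemma set_Blist: "set (Blist T) = {x. x < length T \<and> \<not> fst (T ! x)}"
  unfolding Blist_def by auto

lemma good_Alist_ne: "good T \<Longrightarrow> 0 < length (Alist T)"
  using set_Alist[of T] unfolding good_def by (metis (mono_tags, lifting) empty_iff length_greater_0_conv list.set(1) mem_Collect_eq pos2 order_less_le_trans)

lemma good_Blist_ne: "good T \<Longrightarrow> 0 < length (Blist T)"
proof -
  assume g: "good T"
  then have "1 \<in> set (Blist T)" unfolding set_Blist good_def by auto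
  then show ?thesis by (cases "Blist T") auto
qed

definition tgt :: "cmrt \<Rightarrow> bool \<Rightarrow> bool \<Rightarrow> real \<Rightarrow> nat" where
  "tgt T a s u = (if s = a then Alist T ! idx u (length (Alist T)) else Blist T ! idx u (length (Blist T)))"

lemma cmrt_add_tgt: "cmrt_add T (a, s, u, e) = T @ [(a, Some (tgt T a s u))]"
  unfolding cmrt_add_eq tgt_def ..

lemma tgt_props:
  assumes g: "good T" and u: "0 \<le> u" "u < 1"
  shows "tgt T a s u < length T \<and> fst (T ! tgt T a s u) = (s = a)"
proof (cases "s = a")
  case True
  have "idx u (length (Alist T)) < length (Alist T)" using idx_less[OF u good_Alist_ne[OF g]] .
  then have "Alist T ! idx u (length (Alist T)) \<in> set (Alist T)" by (rule nth_mem)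
  then show ?thesis using True unfolding tgt_def set_Alist by simp
next
  case False
  have "idx u (length (Blist T)) < length (Blist T)" using idx_less[OF u good_Blist_ne[OF g]] .
  then have "Blist T ! idx u (length (Blist T)) \<in> set (Blist T)" by (rule nth_mem)
  then show ?thesis using False unfolding tgt_def set_Blist by simp
qed

lemma good_add:
  assumes g: "good T" and u: "0 \<le> u" "u < 1"
  shows "good (cmrt_add T (a, s, u, e))"
  using g tgt_props[OF g u, of a s] unfolding cmrt_add_tgt good_def
  by (auto simp: nth_append less_Suc_eq)

lemma good_outdeg_len: "good T \<Longrightarrow> outdeg T (length T) = 0"
  unfolding good_def outdeg_def by fastforce

lemma NkA_add_good:
  assumes g: "good T" and u: "0 \<le> u" "u < 1"
  shows "real (NkA k (cmrt_add T (a, s, u, e))) = real (NkA k T)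
    + (if s = a then (if outdeg T (Alist T ! idx u (length (Alist T))) + 1 = k then 1 else 0)
        - (if outdeg T (Alist T ! idx u (length (Alist T))) = k then 1 else 0) else 0)
    + (if a \<and> k = 0 then 1 else 0)"
proof -
  define v where "v = tgt T a s u"
  have v: "v < length T" "fst (T ! v) = (s = a)" using tgt_props[OF g u] unfolding v_def by auto
  have "real (NkA k (cmrt_add T (a, s, u, e))) = real (NkA k T)
     + (if v < length T \<and> fst (T ! v) \<and> outdeg T v + 1 = k then 1 else 0)
     - (if v < length T \<and> fst (T ! v) \<and> outdeg T v = k then 1 else 0)
     + (if a \<and> outdeg T (length T) + (if length T = v then 1 else 0) = k then 1 else 0)"
    unfolding cmrt_add_tgt v_def[symmetric] by (rule NkA_snoc)
  also have "\<dots> = real (NkA k T)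
    + (if s = a then (if outdeg T v + 1 = k then 1 else 0) - (if outdeg T v = k then 1 else 0) else 0)
    + (if a \<and> k = 0 then 1 else 0)"
    using v good_outdeg_len[OF g] by auto
  also have "s = a \<Longrightarrow> v = Alist T ! idx u (length (Alist T))" unfolding v_def tgt_def by simp
  then have "(if s = a then (if outdeg T v + 1 = k then 1 else 0) - (if outdeg T v = k then 1 else 0) else 0)
     = (if s = a then (if outdeg T (Alist T ! idx u (length (Alist T))) + 1 = k then 1 else 0)
        - (if outdeg T (Alist T ! idx u (length (Alist T))) = k then 1 else (0::real)) else 0)"
    by auto
  finally show ?thesis by simp
qed

abbreviation "UU \<equiv> uniform_measure lborel {0..<1::real}"
abbreviation "EE \<equiv> density lborel (exponential_density (1::real))"

lemma prob_UU: "prob_space UU"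
  by (rule prob_space_uniform_measure) auto

lemma prob_EE: "prob_space EE"
  by (rule prob_space_exponential_density) simp

lemma prob_step: "prob_space (step_measure p q)"
proof -
  interpret U: prob_space UU by (rule prob_UU)
  interpret E: prob_space EE by (rule prob_EE)
  interpret UE: pair_prob_space UU EE ..
  interpret Q: prob_space "measure_pmf (bernoulli_pmf q)" by (rule prob_space_measure_pmf)
  interpret QUE: pair_prob_space "measure_pmf (bernoulli_pmf q)" "UU \<Otimes>\<^sub>M EE" ..
  interpret P: prob_space "measure_pmf (bernoulli_pmf p)" by (rule prob_space_measure_pmf)
  interpret PQUE: pair_prob_space "measure_pmf (bernoulli_pmf p)" "measure_pmf (bernoulli_pmf q) \<Otimes>\<^sub>M (UU \<Otimes>\<^sub>M EE)" ..
  show ?thesis unfolding step_measure_def by (rule PQUE.prob_space_axioms)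
qed

lemma space_step: "space (step_measure p q) = UNIV"
  unfolding step_measure_def by (simp add: space_pair_measure)

lemma integral_bern_pair:
  assumes R: "prob_space R" and Gm: "G \<in> borel_measurable (measure_pmf (bernoulli_pmf p) \<Otimes>\<^sub>M R)"
    and Gb: "\<And>x. \<bar>G x\<bar> \<le> B" and p: "0 \<le> p" "p \<le> 1"
  shows "(\<integral>x. G x \<partial>(measure_pmf (bernoulli_pmf p) \<Otimes>\<^sub>M R))
     = p * (\<integral>y. G (True, y) \<partial>R) + (1 - p) * (\<integral>y. G (False, y) \<partial>R)"
proof -
  interpret R: prob_space R by (rule R)
  interpret P: prob_space "measure_pmf (bernoulli_pmf p)" by (rule prob_space_measure_pmf)
  interpret PR: pair_prob_space "measure_pmf (bernoulli_pmf p)" R ..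
  have int: "integrable (measure_pmf (bernoulli_pmf p) \<Otimes>\<^sub>M R) G"
    by (rule PR.integrable_const_bound[where B=B]) (use Gb Gm in auto)
  have "(\<integral>x. G x \<partial>(measure_pmf (bernoulli_pmf p) \<Otimes>\<^sub>M R))
      = (\<integral>a. (\<integral>y. G (a, y) \<partial>R) \<partial>measure_pmf (bernoulli_pmf p))"
    by (rule PR.integral_fst'[OF int, symmetric])
  also have "\<dots> = p * (\<integral>y. G (True, y) \<partial>R) + (1 - p) * (\<integral>y. G (False, y) \<partial>R)"
    using p by (simp add: mult.commute)
  finally show ?thesis .
qed

lemma integral_pair_fst_only:
  assumes R: "prob_space R" and [measurable]: "f \<in> borel_measurable N"
  shows "(\<integral>x. (f (fst x) :: real) \<partial>(N \<Otimes>\<^sub>M R)) = (\<integral>x. f x \<partial>N)"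
proof -
  interpret R: prob_space R by (rule R)
  have "(\<integral>x. f x \<partial>N) = (\<integral>x. f x \<partial>distr (N \<Otimes>\<^sub>M R) N fst)" by (simp add: R.distr_pair_fst)
  also have "\<dots> = (\<integral>x. f (fst x) \<partial>(N \<Otimes>\<^sub>M R))" by (subst integral_distr) auto
  finally show ?thesis ..
qed

lemma integral_step3:
  fixes F :: "bool \<Rightarrow> bool \<Rightarrow> real \<Rightarrow> real"
  assumes Fm[measurable]: "\<And>a s. F a s \<in> borel_measurable borel" and Fb: "\<And>a s u. \<bar>F a s u\<bar> \<le> B"
    and p: "0 \<le> p" "p \<le> 1" and q: "0 \<le> q" "q \<le> 1"
  shows "(\<integral>x. F (fst x) (fst (snd x)) (fst (snd (snd x))) \<partial>step_measure p q)
    = p * q * (\<integral>u. F True True u \<partial>UU) + p * (1 - q) * (\<integral>u. F True False u \<partial>UU)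
      + (1 - p) * q * (\<integral>u. F False True u \<partial>UU) + (1 - p) * (1 - q) * (\<integral>u. F False False u \<partial>UU)"
proof -
  interpret U: prob_space UU by (rule prob_UU)
  interpret E: prob_space EE by (rule prob_EE)
  interpret UE: pair_prob_space UU EE ..
  interpret Q: prob_space "measure_pmf (bernoulli_pmf q)" by (rule prob_space_measure_pmf)
  interpret QUE: pair_prob_space "measure_pmf (bernoulli_pmf q)" "UU \<Otimes>\<^sub>M EE" ..
  have inner: "(\<integral>y. F a (fst y) (fst (snd y)) \<partial>(measure_pmf (bernoulli_pmf q) \<Otimes>\<^sub>M (UU \<Otimes>\<^sub>M EE)))
      = q * (\<integral>u. F a True u \<partial>UU) + (1 - q) * (\<integral>u. F a False u \<partial>UU)" for a
  proof -
    have m1: "(\<lambda>y. F a (fst y) (fst (snd y))) \<in> borel_measurable (measure_pmf (bernoulli_pmf q) \<Otimes>\<^sub>M (UU \<Otimes>\<^sub>M EE))"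
    proof (rule measurable_compose_countable[where f="\<lambda>s y. F a s (fst (snd y))" and g=fst])
      show "fst \<in> measurable (measure_pmf (bernoulli_pmf q) \<Otimes>\<^sub>M (UU \<Otimes>\<^sub>M EE)) (count_space UNIV)"
        by measurable
    qed measurable
    have "(\<integral>y. F a (fst y) (fst (snd y)) \<partial>(measure_pmf (bernoulli_pmf q) \<Otimes>\<^sub>M (UU \<Otimes>\<^sub>M EE)))
      = q * (\<integral>y. F a True (fst y) \<partial>(UU \<Otimes>\<^sub>M EE)) + (1 - q) * (\<integral>y. F a False (fst y) \<partial>(UU \<Otimes>\<^sub>M EE))"
      using integral_bern_pair[where G="\<lambda>y. F a (fst y) (fst (snd y))", OF UE.prob_space_axioms m1 _ q, of B]
        Fb by simp
    also have "(\<integral>y. F a True (fst y) \<partial>(UU \<Otimes>\<^sub>M EE)) = (\<integral>u. F a True u \<partial>UU)"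
      by (rule integral_pair_fst_only[OF prob_EE]) measurable
    also have "(\<integral>y. F a False (fst y) \<partial>(UU \<Otimes>\<^sub>M EE)) = (\<integral>u. F a False u \<partial>UU)"
      by (rule integral_pair_fst_only[OF prob_EE]) measurable
    finally show ?thesis .
  qed
  have m2: "(\<lambda>x. F (fst x) (fst (snd x)) (fst (snd (snd x)))) \<in> borel_measurable (step_measure p q)"
    unfolding step_measure_def
  proof (rule measurable_compose_countable[where f="\<lambda>a x. F a (fst (snd x)) (fst (snd (snd x)))" and g=fst])
    fix a
    show "(\<lambda>x. F a (fst (snd x)) (fst (snd (snd x)))) \<in> borel_measurable (measure_pmf (bernoulli_pmf p) \<Otimes>\<^sub>M (measure_pmf (bernoulli_pmf q) \<Otimes>\<^sub>M (UU \<Otimes>\<^sub>M EE)))"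
    proof (rule measurable_compose_countable[where f="\<lambda>s x. F a s (fst (snd (snd x)))" and g="\<lambda>x. fst (snd x)"])
      show "(\<lambda>x. fst (snd x)) \<in> measurable (measure_pmf (bernoulli_pmf p) \<Otimes>\<^sub>M (measure_pmf (bernoulli_pmf q) \<Otimes>\<^sub>M (UU \<Otimes>\<^sub>M EE))) (count_space UNIV)"
        by measurable
    qed measurable
  qed measurable
  have "(\<integral>x. F (fst x) (fst (snd x)) (fst (snd (snd x))) \<partial>step_measure p q)
    = p * (\<integral>y. F True (fst y) (fst (snd y)) \<partial>(measure_pmf (bernoulli_pmf q) \<Otimes>\<^sub>M (UU \<Otimes>\<^sub>M EE)))
      + (1 - p) * (\<integral>y. F False (fst y) (fst (snd y)) \<partial>(measure_pmf (bernoulli_pmf q) \<Otimes>\<^sub>M (UU \<Otimes>\<^sub>M EE)))"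
    using integral_bern_pair[where G="\<lambda>x. F (fst x) (fst (snd x)) (fst (snd (snd x)))" and B=B,
        OF QUE.prob_space_axioms m2[unfolded step_measure_def] _ p] Fb
    unfolding step_measure_def by simp
  also have "\<dots> = p * q * (\<integral>u. F True True u \<partial>UU) + p * (1 - q) * (\<integral>u. F True False u \<partial>UU)
      + (1 - p) * q * (\<integral>u. F False True u \<partial>UU) + (1 - p) * (1 - q) * (\<integral>u. F False False u \<partial>UU)"
    unfolding inner by (simp add: algebra_simps)
  finally show ?thesis .
qed

lemma integral_pair_snd_only:
  assumes N: "prob_space N" and R: "prob_space R" and [measurable]: "f \<in> borel_measurable R"
    and fb: "\<And>y. \<bar>f y\<bar> \<le> B"
  shows "(\<integral>x. (f (snd x) :: real) \<partial>(N \<Otimes>\<^sub>M R)) = (\<integral>y. f y \<partial>R)"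
proof -
  interpret N: prob_space N by (rule N)
  interpret R: prob_space R by (rule R)
  interpret NR: pair_prob_space N R ..
  have int: "integrable (N \<Otimes>\<^sub>M R) (\<lambda>x. f (snd x))"
    by (rule NR.integrable_const_bound[where B=B]) (use fb in auto)
  have "(\<integral>x. f (snd x) \<partial>(N \<Otimes>\<^sub>M R)) = (\<integral>a. (\<integral>y. f y \<partial>R) \<partial>N)"
    using NR.integral_fst'[OF int] by simp
  also have "\<dots> = (\<integral>y. f y \<partial>R)" by (simp add: N.prob_space)
  finally show ?thesis .
qed

lemma integral_unif_idx:
  fixes G :: "nat \<Rightarrow> real"
  assumes n: "0 < n"
  shows "(\<integral>u. G (idx u n) \<partial>UU) = (\<Sum>i<n. G i) / n"
proof -
  let ?I = "\<lambda>i. {real i / n ..< real (Suc i) / n}"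
  have sp: "space UU = UNIV" by simp
  have ae: "AE u in UU. u \<in> {0..<1}"
    by (rule AE_uniform_measureI) auto
  have eq: "G (idx u n) = (\<Sum>i<n. G i * indicator (?I i) u)" if u: "u \<in> {0..<1}" for u
  proof -
    have iff: "u \<in> ?I i \<longleftrightarrow> i = idx u n" for i
    proof -
      have "u \<in> ?I i \<longleftrightarrow> real i \<le> u * n \<and> u * n < real i + 1"
        using n by (auto simp: field_simps)
      also have "\<dots> \<longleftrightarrow> \<lfloor>u * n\<rfloor> = int i" by (simp add: floor_eq_iff)
      also have "\<dots> \<longleftrightarrow> i = idx u n"
        unfolding idx_def using u by auto
      finally show ?thesis .
    qed
    have "(\<Sum>i<n. G i * indicator (?I i) u) = (\<Sum>i<n. if i = idx u n then G i else 0)"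
      by (intro sum.cong refl) (simp only: indicator_def iff, simp)
    also have "\<dots> = G (idx u n)" using idx_less[of u n] u n by simp
    finally show ?thesis ..
  qed
  have "(\<integral>u. G (idx u n) \<partial>UU) = (\<integral>u. (\<Sum>i<n. G i * indicator (?I i) u) \<partial>UU)"
  proof (rule integral_cong_AE)
    show "(\<lambda>u. G (idx u n)) \<in> borel_measurable UU" unfolding idx_def by measurable
    show "(\<lambda>u. \<Sum>i<n. G i * indicator (?I i) u) \<in> borel_measurable UU" by measurable
    show "AE u in UU. G (idx u n) = (\<Sum>i<n. G i * indicator (?I i) u)"
      using ae by (rule eventually_mono) (rule eq)
  qed
  also have "\<dots> = (\<Sum>i<n. G i * measure UU (?I i))"
  proof -
    interpret U: prob_space UU by (rule prob_UU)
    have "(\<integral>u. (\<Sum>i<n. G i * indicator (?I i) u) \<partial>UU) = (\<Sum>i<n. (\<integral>u. G i * indicator (?I i) u \<partial>UU))"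
      by (rule Bochner_Integration.integral_sum) (auto intro!: integrable_mult_right simp: U.emeasure_eq_measure)
    also have "\<dots> = (\<Sum>i<n. G i * measure UU (?I i))" by simp
    finally show ?thesis .
  qed
  also have "\<dots> = (\<Sum>i<n. G i * (1 / n))"
  proof (intro sum.cong refl)
    fix i assume i: "i \<in> {..<n}"
    have sub: "{0..<1} \<inter> ?I i = ?I i"
    proof -
      have "0 \<le> real i / n" by simp
      moreover have "real (Suc i) / n \<le> 1" using i n by (simp add: field_simps)
      ultimately show ?thesis by auto
    qed
    have "measure UU (?I i) = measure lborel ({0..<1} \<inter> ?I i) / measure lborel {0..<1::real}"
      by (rule measure_uniform_measure) auto
    also have "\<dots> = measure lborel (?I i)" unfolding sub by simp
    also have "\<dots> = 1 / n" using n by (simp add: field_simps)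
    finally show "G i * measure UU (?I i) = G i * (1 / n)" by simp
  qed
  also have "\<dots> = (\<Sum>i<n. G i) / n" by (simp add: sum_divide_distrib)
  finally show ?thesis .
qed

lemma AE_step: "AE x in step_measure p q. 0 \<le> fst (snd (snd x)) \<and> fst (snd (snd x)) < 1 \<and> 0 \<le> snd (snd (snd x))"
proof -
  interpret U: prob_space UU by (rule prob_UU)
  interpret E: prob_space EE by (rule prob_EE)
  interpret UE: pair_prob_space UU EE ..
  interpret Q: prob_space "measure_pmf (bernoulli_pmf q)" by (rule prob_space_measure_pmf)
  interpret QUE: pair_prob_space "measure_pmf (bernoulli_pmf q)" "UU \<Otimes>\<^sub>M EE" ..
  interpret P: prob_space "measure_pmf (bernoulli_pmf p)" by (rule prob_space_measure_pmf)
  interpret PQUE: pair_prob_space "measure_pmf (bernoulli_pmf p)" "measure_pmf (bernoulli_pmf q) \<Otimes>\<^sub>M (UU \<Otimes>\<^sub>M EE)" ..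
  have a1: "AE u in UU. 0 \<le> u \<and> u < 1" by (rule AE_uniform_measureI) auto
  have a2: "AE e in EE. 0 \<le> e" by (subst AE_density) (auto simp: exponential_density_def)
  have a3: "AE y in UU \<Otimes>\<^sub>M EE. 0 \<le> fst y \<and> fst y < 1 \<and> 0 \<le> snd y"
  proof (rule UE.AE_pair_measure)
    show "{y \<in> space (UU \<Otimes>\<^sub>M EE). 0 \<le> fst y \<and> fst y < 1 \<and> 0 \<le> snd y} \<in> sets (UU \<Otimes>\<^sub>M EE)"
      by measurable
    show "AE x in UU. AE y in EE. 0 \<le> fst (x, y) \<and> fst (x, y) < 1 \<and> 0 \<le> snd (x, y)"
      using a1 a2 by (auto elim!: eventually_mono)
  qed
  have a4: "AE y in measure_pmf (bernoulli_pmf q) \<Otimes>\<^sub>M (UU \<Otimes>\<^sub>M EE). 0 \<le> fst (snd y) \<and> fst (snd y) < 1 \<and> 0 \<le> snd (snd y)"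
  proof (rule QUE.AE_pair_measure)
    show "{y \<in> space (measure_pmf (bernoulli_pmf q) \<Otimes>\<^sub>M (UU \<Otimes>\<^sub>M EE)). 0 \<le> fst (snd y) \<and> fst (snd y) < 1 \<and> 0 \<le> snd (snd y)}
      \<in> sets (measure_pmf (bernoulli_pmf q) \<Otimes>\<^sub>M (UU \<Otimes>\<^sub>M EE))"
      by measurable
  qed (use a3 in auto)
  show ?thesis unfolding step_measure_def
  proof (rule PQUE.AE_pair_measure)
    show "{y \<in> space (measure_pmf (bernoulli_pmf p) \<Otimes>\<^sub>M (measure_pmf (bernoulli_pmf q) \<Otimes>\<^sub>M (UU \<Otimes>\<^sub>M EE))).
       0 \<le> fst (snd (snd y)) \<and> fst (snd (snd y)) < 1 \<and> 0 \<le> snd (snd (snd y))}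
      \<in> sets (measure_pmf (bernoulli_pmf p) \<Otimes>\<^sub>M (measure_pmf (bernoulli_pmf q) \<Otimes>\<^sub>M (UU \<Otimes>\<^sub>M EE)))"
      by measurable
  qed (use a4 in auto)
qed

lemma integral_step_E:
  "(\<integral>x. (if 1 < snd (snd (snd x)) then 1 else (0::real)) \<partial>step_measure p q) = exp (-1)"
proof -
  interpret U: prob_space UU by (rule prob_UU)
  interpret E: prob_space EE by (rule prob_EE)
  interpret UE: pair_prob_space UU EE ..
  interpret Q: prob_space "measure_pmf (bernoulli_pmf q)" by (rule prob_space_measure_pmf)
  interpret QUE: pair_prob_space "measure_pmf (bernoulli_pmf q)" "UU \<Otimes>\<^sub>M EE" ..
  interpret P: prob_space "measure_pmf (bernoulli_pmf p)" by (rule prob_space_measure_pmf)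
  let ?f = "\<lambda>e::real. if 1 < e then 1 else (0::real)"
  have "(\<integral>x. ?f (snd (snd (snd x))) \<partial>step_measure p q) = (\<integral>y. ?f (snd (snd y)) \<partial>(measure_pmf (bernoulli_pmf q) \<Otimes>\<^sub>M (UU \<Otimes>\<^sub>M EE)))"
    unfolding step_measure_def
    by (rule integral_pair_snd_only[where f="\<lambda>y. ?f (snd (snd y))" and B=1, OF prob_space_measure_pmf QUE.prob_space_axioms]) auto
  also have "\<dots> = (\<integral>y. ?f (snd y) \<partial>(UU \<Otimes>\<^sub>M EE))"
    by (rule integral_pair_snd_only[where f="\<lambda>y. ?f (snd y)" and B=1, OF prob_space_measure_pmf UE.prob_space_axioms]) auto
  also have "\<dots> = (\<integral>e. ?f e \<partial>EE)"
    by (rule integral_pair_snd_only[where B=1, OF U.prob_space_axioms E.prob_space_axioms]) auto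
  also have "\<dots> = measure EE {1<..}"
  proof -
    have "(\<lambda>e::real. if 1 < e then 1 else (0::real)) = indicator {1<..}" by (auto simp: indicator_def fun_eq_iff)
    then show ?thesis by simp
  qed
  also have "\<dots> = 1 - measure EE {..1}"
  proof -
    have "{1<..} = space EE - {..1::real}" by auto
    then show ?thesis using E.prob_compl[of "{..1::real}"] by simp
  qed
  also have "measure EE {..1} = 1 - exp (-1)"
    using emeasure_erlang_density[of 1 0 1] by (simp add: erlang_CDF_0 measure_def)
  finally show ?thesis by simp
qed

lemma meas_idx[measurable]: "(\<lambda>x. idx (f x) n) \<in> measurable M (count_space UNIV)"
  if [measurable]: "f \<in> borel_measurable M"
  unfolding idx_def by measurable

lemma meas_cmrt_add: "(\<lambda>x. cmrt_add T x) \<in> measurable (step_measure p q) (count_space UNIV)"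
proof -
  define G where "G a s i j = T @ [(a, Some (if s = a then Alist T ! i else Blist T ! j))]" for a s i j
  have eq: "cmrt_add T x = G (fst x) (fst (snd x)) (idx (fst (snd (snd x))) (length (Alist T)))
     (idx (fst (snd (snd x))) (length (Blist T)))" for x
    by (cases x) (simp add: cmrt_add_eq G_def)
  have "(\<lambda>x. G (fst x) (fst (snd x)) (idx (fst (snd (snd x))) (length (Alist T)))
     (idx (fst (snd (snd x))) (length (Blist T)))) \<in> measurable (step_measure p q) (count_space UNIV)"
    unfolding step_measure_def
  proof (rule measurable_compose_countable[where g=fst])
    fix a
    show "(\<lambda>x. G a (fst (snd x)) (idx (fst (snd (snd x))) (length (Alist T))) (idx (fst (snd (snd x))) (length (Blist T))))
      \<in> measurable (measure_pmf (bernoulli_pmf p) \<Otimes>\<^sub>M (measure_pmf (bernoulli_pmf q) \<Otimes>\<^sub>M (UU \<Otimes>\<^sub>M EE))) (count_space UNIV)"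
    proof (rule measurable_compose_countable[where g="\<lambda>x. fst (snd x)"])
      fix s
      show "(\<lambda>x. G a s (idx (fst (snd (snd x))) (length (Alist T))) (idx (fst (snd (snd x))) (length (Blist T))))
        \<in> measurable (measure_pmf (bernoulli_pmf p) \<Otimes>\<^sub>M (measure_pmf (bernoulli_pmf q) \<Otimes>\<^sub>M (UU \<Otimes>\<^sub>M EE))) (count_space UNIV)"
      proof (rule measurable_compose_countable[where g="\<lambda>x. idx (fst (snd (snd x))) (length (Alist T))"])
        fix i
        show "(\<lambda>x. G a s i (idx (fst (snd (snd x))) (length (Blist T))))
          \<in> measurable (measure_pmf (bernoulli_pmf p) \<Otimes>\<^sub>M (measure_pmf (bernoulli_pmf q) \<Otimes>\<^sub>M (UU \<Otimes>\<^sub>M EE))) (count_space UNIV)"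
          by (rule measurable_compose_countable[where g="\<lambda>x. idx (fst (snd (snd x))) (length (Blist T))"]) measurable
      qed measurable
    qed measurable
  qed measurable
  then show ?thesis unfolding eq .
qed

lemma meas_cmrt_seq[measurable]: "(\<lambda>w. cmrt_seq w m) \<in> measurable (cmrt_space p q) (count_space UNIV)"
proof (induction m)
  case 0 then show ?case by simp
next
  case (Suc m)
  have "(\<lambda>w. cmrt_add (cmrt_seq w m) (w m)) \<in> measurable (cmrt_space p q) (count_space UNIV)"
  proof (rule measurable_compose_countable[where g="\<lambda>w. cmrt_seq w m" and f="\<lambda>T w. cmrt_add T (w m)"])
    fix T
    show "(\<lambda>w. cmrt_add T (w m)) \<in> measurable (cmrt_space p q) (count_space UNIV)"
    proof -
      have 1: "(\<lambda>w. w m) \<in> measurable (cmrt_space p q) (step_measure p q)"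
        unfolding cmrt_space_def by (rule measurable_component_singleton) simp
      show ?thesis using measurable_compose[OF 1 meas_cmrt_add[of T p q]] by simp
    qed
  qed (rule Suc)
  then show ?case by simp
qed

lemma sum_Alist:
  "(\<Sum>i<length (Alist T). (if P (Alist T ! i) then 1 else 0) :: real)
     = real (card {v. v < length T \<and> fst (T ! v) \<and> P v})"
proof -
  have d: "distinct (Alist T)" unfolding Alist_def by simp
  have "(\<Sum>i<length (Alist T). (if P (Alist T ! i) then 1 else 0) :: real)
      = sum_list (map (\<lambda>v. if P v then 1 else (0::real)) (Alist T))"
    by (simp add: sum_list_sum_nth lessThan_atLeast0)
  also have "\<dots> = (\<Sum>v\<in>set (Alist T). if P v then 1 else (0::real))"
    using d by (rule sum_list_distinct_conv_sum_set)
  also have "\<dots> = (\<Sum>v\<in>{v \<in> set (Alist T). P v}. 1::real)"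
    by (rule sum.inter_filter[symmetric]) simp
  also have "{v \<in> set (Alist T). P v} = {v. v < length T \<and> fst (T ! v) \<and> P v}"
    unfolding set_Alist by auto
  finally show ?thesis by simp
qed

lemma num_A_Alist: "num_A T = length (Alist T)"
proof -
  have "filter fst T = filter fst (map ((!) T) [0..<length T])" by (simp add: map_nth)
  also have "\<dots> = map ((!) T) (filter (\<lambda>i. fst (T ! i)) [0..<length T])" by (simp add: filter_map comp_def)
  finally show ?thesis unfolding num_A_def Alist_def by simp
qed

definition rho :: "real \<Rightarrow> real \<Rightarrow> real" where
  "rho p q = p * q + (1 - p) * (1 - q)"

definition Nk1 :: "nat \<Rightarrow> cmrt \<Rightarrow> nat" where
  "Nk1 k T = card {v. v < length T \<and> fst (T ! v) \<and> outdeg T v + 1 = k}"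

lemma drift:
  assumes g: "good T" and p: "0 \<le> p" "p \<le> 1" and q: "0 \<le> q" "q \<le> 1"
  shows "(\<integral>x. real (NkA k (cmrt_add T x)) \<partial>step_measure p q)
    = real (NkA k T) + rho p q * (real (Nk1 k T) - real (NkA k T)) / real (num_A T)
      + p * (if k = 0 then 1 else 0)"
proof -
  define nA where "nA = length (Alist T)"
  have nA: "0 < nA" unfolding nA_def by (rule good_Alist_ne[OF g])
  define H where "H i = (if outdeg T (Alist T ! i) + 1 = k then 1 else 0)
      - (if outdeg T (Alist T ! i) = k then 1 else (0::real))" for i
  define F where "F a s u = real (NkA k T) + (if s = a then H (idx u nA) else 0)
      + (if a \<and> k = 0 then 1 else (0::real))" for a s u
  have Hb: "\<bar>H i\<bar> \<le> 1" for i unfolding H_def by auto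
  have Fb: "\<bar>F a s u\<bar> \<le> real (NkA k T) + 2" for a s u
    using Hb[of "idx u nA"] unfolding F_def by (auto simp: abs_if split: if_splits)
  have Fm: "F a s \<in> borel_measurable borel" for a s unfolding F_def by measurable
  have "(\<integral>x. real (NkA k (cmrt_add T x)) \<partial>step_measure p q)
      = (\<integral>x. F (fst x) (fst (snd x)) (fst (snd (snd x))) \<partial>step_measure p q)"
  proof (rule integral_cong_AE)
    show "(\<lambda>x. real (NkA k (cmrt_add T x))) \<in> borel_measurable (step_measure p q)"
      using meas_cmrt_add by measurable
    show "(\<lambda>x. F (fst x) (fst (snd x)) (fst (snd (snd x)))) \<in> borel_measurable (step_measure p q)"
    proof -
      have "(\<lambda>x. F (fst x) (fst (snd x)) (fst (snd (snd x)))) \<in> borel_measurable (step_measure p q)"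
        unfolding step_measure_def
      proof (rule measurable_compose_countable[where g=fst and f="\<lambda>a x. F a (fst (snd x)) (fst (snd (snd x)))"])
        fix a
        show "(\<lambda>x. F a (fst (snd x)) (fst (snd (snd x))))
           \<in> borel_measurable (measure_pmf (bernoulli_pmf p) \<Otimes>\<^sub>M (measure_pmf (bernoulli_pmf q) \<Otimes>\<^sub>M (UU \<Otimes>\<^sub>M EE)))"
          by (rule measurable_compose_countable[where g="\<lambda>x. fst (snd x)" and f="\<lambda>s x. F a s (fst (snd (snd x)))"])
             (use Fm in measurable)
      qed measurable
      then show ?thesis .
    qed
    show "AE x in step_measure p q. real (NkA k (cmrt_add T x)) = F (fst x) (fst (snd x)) (fst (snd (snd x)))"
      using AE_step
    proof (rule eventually_mono)
      fix x :: step_rand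
      obtain a s u e where x: "x = (a, s, u, e)" by (cases x) auto
      assume "0 \<le> fst (snd (snd x)) \<and> fst (snd (snd x)) < 1 \<and> 0 \<le> snd (snd (snd x))"
      then have u: "0 \<le> u" "u < 1" unfolding x by auto
      show "real (NkA k (cmrt_add T x)) = F (fst x) (fst (snd x)) (fst (snd (snd x)))"
        unfolding x F_def H_def nA_def using NkA_add_good[OF g u, of k a s e] by simp
    qed
  qed
  also have "\<dots> = p * q * (\<integral>u. F True True u \<partial>UU) + p * (1 - q) * (\<integral>u. F True False u \<partial>UU)
      + (1 - p) * q * (\<integral>u. F False True u \<partial>UU) + (1 - p) * (1 - q) * (\<integral>u. F False False u \<partial>UU)"
    by (rule integral_step3[OF Fm Fb p q])
  also have "\<dots> = real (NkA k T) + rho p q * (real (Nk1 k T) - real (NkA k T)) / real (num_A T)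
      + p * (if k = 0 then 1 else 0)"
  proof -
    interpret U: prob_space UU by (rule prob_UU)
    have iH: "(\<integral>u. H (idx u nA) \<partial>UU) = (real (Nk1 k T) - real (NkA k T)) / real (num_A T)"
    proof -
      have "(\<integral>u. H (idx u nA) \<partial>UU) = (\<Sum>i<nA. H i) / nA" by (rule integral_unif_idx[OF nA])
      also have "(\<Sum>i<nA. H i) = (\<Sum>i<nA. (if outdeg T (Alist T ! i) + 1 = k then 1 else 0))
          - (\<Sum>i<nA. (if outdeg T (Alist T ! i) = k then 1 else (0::real)))"
        unfolding H_def by (simp add: sum_subtractf)
      also have "\<dots> = real (Nk1 k T) - real (NkA k T)"
        using sum_Alist[of "\<lambda>v. outdeg T v + 1 = k" T] sum_Alist[of "\<lambda>v. outdeg T v = k" T]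
        unfolding nA_def Nk1_def NkA_def by simp
      finally show ?thesis unfolding num_A_Alist nA_def .
    qed
    have int_c: "integrable UU (\<lambda>u. H (idx u nA))"
      by (rule U.integrable_const_bound[where B=1]) (use Hb in \<open>auto simp: idx_def\<close>)
    have iF: "(\<integral>u. F a s u \<partial>UU) = real (NkA k T) + (if s = a then (\<integral>u. H (idx u nA) \<partial>UU) else 0)
       + (if a \<and> k = 0 then 1 else 0)" for a s
      unfolding F_def using int_c by (cases "s = a") (simp_all add: U.prob_space)
    have nz: "real (num_A T) \<noteq> 0" using nA unfolding num_A_Alist nA_def by simp
    show ?thesis unfolding iF iH rho_def using nz by (simp add: field_simps)
  qed
  finally show ?thesis .
qed

lemma seq_space: "sequence_space (step_measure p q)"
  unfolding sequence_space_def product_prob_space_def product_prob_space_axioms_def product_sigma_finite_def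
  using prob_step[of p q] by (auto intro: prob_space_imp_sigma_finite)

lemma cmrt_seq_dep: "(\<forall>i<m. w i = w' i) \<Longrightarrow> cmrt_seq w m = cmrt_seq w' m"
  by (induction m) auto

lemma cmrt_seq_upd_same: "cmrt_seq (w(j := x)) j = cmrt_seq w j"
  by (rule cmrt_seq_dep) auto

lemma cmrt_seq_upd_Suc: "cmrt_seq (w(j := x)) (Suc j) = cmrt_add (cmrt_seq w j) x"
  by (simp add: cmrt_seq_upd_same)

lemma num_A_seq_ge1: "1 \<le> num_A (cmrt_seq w m)"
proof (induction m)
  case 0 then show ?case by (simp add: cmrt_init_def num_A_def)
next
  case (Suc m) then show ?case by (simp add: num_A_cmrt_add)
qed

lemma num_A_le_length: "num_A T \<le> length T"
  unfolding num_A_def by simp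

lemma Nk1_le_num_A: "Nk1 k T \<le> num_A T"
  unfolding Nk1_def num_A_alt by (rule card_mono) auto

lemma Nk1_0: "Nk1 0 T = 0"
  unfolding Nk1_def by simp

lemma Nk1_Suc: "Nk1 (Suc k) T = NkA k T"
  unfolding Nk1_def NkA_def by simp

lemma rho_bounds: "0 \<le> p \<Longrightarrow> p \<le> 1 \<Longrightarrow> 0 \<le> q \<Longrightarrow> q \<le> 1 \<Longrightarrow> 0 \<le> rho p q \<and> rho p q \<le> 1"
  unfolding rho_def by (auto intro!: add_nonneg_nonneg mult_nonneg_nonneg)
    (smt (verit, ccfv_SIG) mult_left_le mult_right_mono)

definition dr :: "real \<Rightarrow> real \<Rightarrow> nat \<Rightarrow> cmrt \<Rightarrow> real" where
  "dr p q k T = rho p q * (real (Nk1 k T) - real (NkA k T)) / real (num_A T) + p * (if k = 0 then 1 else 0)"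

definition gL :: "real \<Rightarrow> real \<Rightarrow> nat \<Rightarrow> nat \<Rightarrow> (nat \<Rightarrow> step_rand) \<Rightarrow> real" where
  "gL p q k j w = real (NkA k (cmrt_seq w (Suc j))) - real (NkA k (cmrt_seq w j)) - dr p q k (cmrt_seq w j)"

lemma erlang_integral_1:
  assumes l: "0 < l"
  shows "(\<integral>x. erlang_density k l x \<partial>lborel) = 1"
proof -
  have "has_bochner_integral lborel (erlang_density k l) 1"
  proof (rule has_bochner_integral_nn_integral)
    show "(\<integral>\<^sup>+ x. ennreal (erlang_density k l x) \<partial>lborel) = ennreal 1"
      using nn_integral_erlang_ith_moment[OF l, of k 0] by simp
  qed (use l in auto)
  then show ?thesis by (rule has_bochner_integral_integral_eq)
qed

lemma poisson_integral:
  fixes r :: real and k :: nat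
  assumes r: "0 \<le> r"
  shows "(LINT s:{0..}|lborel. poisson_prob (r * s) k * exp (- s)) = r ^ k / (1 + r) ^ Suc k"
proof -
  define l where "l = 1 + r"
  have l: "0 < l" unfolding l_def using r by simp
  define c where "c = r ^ k / l ^ Suc k"
  have eq: "indicator {0..} s *\<^sub>R (poisson_prob (r * s) k * exp (- s)) = c * erlang_density k l s" for s :: real
  proof (cases "0 \<le> s")
    case True
    have "exp (- (r * s)) * exp (- s) = exp (- l * s)" unfolding l_def
      by (simp add: exp_add[symmetric] algebra_simps)
    moreover have "l ^ Suc k \<noteq> 0" using l by simp
    ultimately show ?thesis using True
      unfolding poisson_prob_def erlang_density_def c_def
      by (simp add: power_mult_distrib field_simps)
  next
    case False
    then show ?thesis by (simp add: erlang_density_def)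
  qed
  have "(LINT s:{0..}|lborel. poisson_prob (r * s) k * exp (- s)) = (\<integral>s. c * erlang_density k l s \<partial>lborel)"
    unfolding set_lebesgue_integral_def eq ..
  also have "\<dots> = c" using erlang_integral_1[OF l, of k] by simp
  finally show ?thesis unfolding c_def l_def .
qed

context
  fixes p q :: real
  assumes p: "0 < p" "p \<le> 1" and q: "0 \<le> q" "q \<le> 1"
begin

interpretation S: sequence_space "step_measure p q" by (rule seq_space)

lemma M_eq: "cmrt_space p q = S.S" unfolding cmrt_space_def ..

lemma AE_good: "AE w in cmrt_space p q. \<forall>j. good (cmrt_seq w j) \<and> 0 \<le> snd (snd (snd (w j)))"
proof -
  have "AE w in cmrt_space p q. \<forall>i. 0 \<le> fst (snd (snd (w i))) \<and> fst (snd (snd (w i))) < 1 \<and> 0 \<le> snd (snd (snd (w i)))"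
    unfolding AE_all_countable M_eq by (intro allI S.AE_component UNIV_I AE_step)
  then show ?thesis
  proof (rule eventually_mono)
    fix w :: "nat \<Rightarrow> step_rand"
    assume a: "\<forall>i. 0 \<le> fst (snd (snd (w i))) \<and> fst (snd (snd (w i))) < 1 \<and> 0 \<le> snd (snd (snd (w i)))"
    have "good (cmrt_seq w j)" for j
    proof (induction j)
      case 0 then show ?case by (simp add: good_init)
    next
      case (Suc j)
      obtain a1 s1 u1 e1 where wj: "w j = (a1, s1, u1, e1)" by (cases "w j") auto
      have u: "0 \<le> u1" "u1 < 1" using a[rule_format, of j] unfolding wj by auto
      show ?case using good_add[OF Suc u, of a1 s1 e1] wj by simp
    qed
    then show "\<forall>j. good (cmrt_seq w j) \<and> 0 \<le> snd (snd (snd (w j)))" using a by auto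
  qed
qed

lemma dr_bound: "\<bar>dr p q k (cmrt_seq w j)\<bar> \<le> 3"
proof -
  let ?T = "cmrt_seq w j"
  have r: "0 \<le> rho p q" "rho p q \<le> 1" using rho_bounds p q by auto
  have n1: "1 \<le> real (num_A ?T)" using num_A_seq_ge1[of w j] by simp
  have a: "real (Nk1 k ?T) \<le> real (num_A ?T)" "real (NkA k ?T) \<le> real (num_A ?T)"
    using Nk1_le_num_A NkA_le_num_A by auto
  have "\<bar>real (Nk1 k ?T) - real (NkA k ?T)\<bar> \<le> real (num_A ?T)" using a by linarith
  then have "\<bar>real (Nk1 k ?T) - real (NkA k ?T)\<bar> / real (num_A ?T) \<le> 1" using n1 by simp
  have "rho p q * \<bar>real (Nk1 k ?T) - real (NkA k ?T)\<bar> \<le> 1 * real (num_A ?T)"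
    by (rule mult_mono) (use r \<open>\<bar>real (Nk1 k ?T) - real (NkA k ?T)\<bar> \<le> real (num_A ?T)\<close> in auto)
  then have "\<bar>rho p q * (real (Nk1 k ?T) - real (NkA k ?T)) / real (num_A ?T)\<bar> \<le> 1"
    using r n1 by (simp add: abs_mult)
  then show ?thesis unfolding dr_def using p by (auto simp: abs_if split: if_splits)
qed

lemma gL_bound: "\<bar>gL p q k j w\<bar> \<le> 5"
proof -
  have "\<bar>real (NkA k (cmrt_seq w (Suc j))) - real (NkA k (cmrt_seq w j))\<bar> \<le> 2"
    using NkA_cmrt_add_bound by simp
  then show ?thesis unfolding gL_def using dr_bound[of k w j] by linarith
qed

lemma gL_meas[measurable]: "gL p q k j \<in> borel_measurable (cmrt_space p q)"
proof -
  have 1: "(\<lambda>w. cmrt_seq w (Suc j)) \<in> measurable (cmrt_space p q) (count_space UNIV)" by measurable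
  have 2: "(\<lambda>w. cmrt_seq w j) \<in> measurable (cmrt_space p q) (count_space UNIV)" by measurable
  have "(\<lambda>w. (\<lambda>(T1, T2). real (NkA k T1) - real (NkA k T2) - dr p q k T2) (cmrt_seq w (Suc j), cmrt_seq w j))
     \<in> borel_measurable (cmrt_space p q)"
  proof (rule measurable_compose[OF measurable_Pair[OF 1 2]])
    show "(\<lambda>(T1, T2). real (NkA k T1) - real (NkA k T2) - dr p q k T2) \<in> borel_measurable (count_space UNIV \<Otimes>\<^sub>M count_space UNIV)"
      unfolding pair_measure_countable by simp
  qed
  then show ?thesis unfolding gL_def[abs_def] by simp
qed

lemma gL_dep: "(\<forall>l\<le>j. w l = w' l) \<Longrightarrow> gL p q k j w = gL p q k j w'"
  unfolding gL_def using cmrt_seq_dep[of "Suc j" w w'] cmrt_seq_dep[of j w w'] by auto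

lemma gL_zero: "AE w in cmrt_space p q. (\<integral>x. gL p q k j (w(j := x)) \<partial>step_measure p q) = 0"
  using AE_good
proof (rule eventually_mono)
  fix w assume "\<forall>j. good (cmrt_seq w j) \<and> 0 \<le> snd (snd (snd (w j)))"
  then have g: "good (cmrt_seq w j)" by auto
  let ?T = "cmrt_seq w j"
  have int: "integrable (step_measure p q) (\<lambda>x. real (NkA k (cmrt_add ?T x)))"
  proof (rule S.M.integrable_const_bound[where B="real (NkA k ?T) + 2"])
    show "AE x in step_measure p q. norm (real (NkA k (cmrt_add ?T x))) \<le> real (NkA k ?T) + 2"
    proof (rule AE_I2)
      fix x
      have "\<bar>real (NkA k (cmrt_add ?T x)) - real (NkA k ?T)\<bar> \<le> 2" by (rule NkA_cmrt_add_bound)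
      then have "real (NkA k (cmrt_add ?T x)) \<le> real (NkA k ?T) + 2" by (simp add: abs_le_iff)
      then show "norm (real (NkA k (cmrt_add ?T x))) \<le> real (NkA k ?T) + 2" by simp
    qed
    show "(\<lambda>x. real (NkA k (cmrt_add ?T x))) \<in> borel_measurable (step_measure p q)"
      using meas_cmrt_add by measurable
  qed
  have "(\<integral>x. gL p q k j (w(j := x)) \<partial>step_measure p q)
      = (\<integral>x. real (NkA k (cmrt_add ?T x)) - (real (NkA k ?T) + dr p q k ?T) \<partial>step_measure p q)"
    unfolding gL_def cmrt_seq_upd_same cmrt_seq_upd_Suc by (simp add: algebra_simps)
  also have "\<dots> = (\<integral>x. real (NkA k (cmrt_add ?T x)) \<partial>step_measure p q) - (real (NkA k ?T) + dr p q k ?T)"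
    using int by (simp add: S.M.prob_space)
  also have "\<dots> = 0" unfolding drift[OF g less_imp_le[OF p(1)] p(2) q] dr_def by simp
  finally show "(\<integral>x. gL p q k j (w(j := x)) \<partial>step_measure p q) = 0" .
qed

lemma gL_slln: "AE w in cmrt_space p q. (\<lambda>m. (\<Sum>j<m. gL p q k j w) / m) \<longlonglongrightarrow> 0"
  unfolding M_eq
  by (rule S.mart_slln[where B=5, OF gL_meas[unfolded M_eq] gL_bound gL_dep gL_zero[unfolded M_eq]])


definition pkf :: "nat \<Rightarrow> real" where
  "pkf k = p / (1 + rho p q / p) * (rho p q / p / (1 + rho p q / p)) ^ k"

lemma levels:
  assumes lN: "(\<lambda>m. real (num_A (cmrt_seq w m)) / m) \<longlonglongrightarrow> p"
    and lS: "\<forall>k. (\<lambda>m. (\<Sum>j<m. gL p q k j w) / m) \<longlonglongrightarrow> 0"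
  shows "(\<lambda>m. real (NkA k (cmrt_seq w m)) / m) \<longlonglongrightarrow> pkf k"
proof (induction k)
  have r: "0 \<le> rho p q" "rho p q \<le> 1" using rho_bounds p q by auto
  have rp: "0 \<le> rho p q / p" using r p by simp
  have rec: "real (NkA k (cmrt_seq w (Suc m))) = real (NkA k (cmrt_seq w m)) + p * (if k = 0 then 1 else 0)
     + rho p q * (real (Nk1 k (cmrt_seq w m)) - real (NkA k (cmrt_seq w m))) / real (num_A (cmrt_seq w m))
     + ((\<Sum>j<Suc m. gL p q k j w) - (\<Sum>j<m. gL p q k j w))" for k m
    by (simp add: gL_def dr_def)
  have N1: "1 \<le> real (num_A (cmrt_seq w m))" for m using num_A_seq_ge1[of w m] by simp
  {
    case 0
    have ly: "(\<lambda>m. real (Nk1 0 (cmrt_seq w m)) / m) \<longlonglongrightarrow> 0" by (simp add: Nk1_0)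
    have "(\<lambda>m. real (NkA 0 (cmrt_seq w m)) / m) \<longlonglongrightarrow> (p * (if (0::nat) = 0 then 1 else 0) + rho p q / p * 0) / (1 + rho p q / p)"
      by (rule level_limit[OF rec N1 r p(1) lN ly lS[rule_format]])
    moreover have "(p * (if (0::nat) = 0 then 1 else 0) + rho p q / p * 0) / (1 + rho p q / p) = pkf 0"
      unfolding pkf_def by simp
    ultimately show ?case by simp
  next
    case (Suc k)
    have ly: "(\<lambda>m. real (Nk1 (Suc k) (cmrt_seq w m)) / m) \<longlonglongrightarrow> pkf k" using Suc by (simp add: Nk1_Suc)
    have "(\<lambda>m. real (NkA (Suc k) (cmrt_seq w m)) / m) \<longlonglongrightarrow> (p * (if Suc k = 0 then 1 else 0) + rho p q / p * pkf k) / (1 + rho p q / p)"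
      by (rule level_limit[OF rec N1 r p(1) lN ly lS[rule_format]])
    moreover have "(p * (if Suc k = 0 then 1 else 0) + rho p q / p * pkf k) / (1 + rho p q / p) = pkf (Suc k)"
    proof -
      have "1 + rho p q / p \<noteq> 0" using rp by linarith
      then show ?thesis unfolding pkf_def by (simp add: field_simps)
    qed
    ultimately show ?case by simp
  }
qed

lemma gA_props:
  shows "(\<lambda>w. (if fst (w j) then 1 else 0) - p) \<in> borel_measurable (cmrt_space p q)"
    and "\<bar>(if fst (w j) then 1 else 0) - p\<bar> \<le> 1"
    and "AE w in cmrt_space p q. (\<integral>x. (if fst ((w(j := x)) j) then 1 else 0) - p \<partial>step_measure p q) = 0"
proof -
  have 1: "(\<lambda>w. w j) \<in> measurable (cmrt_space p q) (step_measure p q)"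
    unfolding cmrt_space_def by (rule measurable_component_singleton) simp
  have 2: "(\<lambda>x. (if fst x then 1 else 0) - p) \<in> borel_measurable (step_measure p q)"
    unfolding step_measure_def by measurable
  show "(\<lambda>w. (if fst (w j) then 1 else 0) - p) \<in> borel_measurable (cmrt_space p q)"
    using measurable_compose[OF 1 2] by simp
  show "\<bar>(if fst (w j) then 1 else 0) - p\<bar> \<le> 1" using p by auto
  have "(\<integral>x. (if fst x then 1 else 0) \<partial>step_measure p q) = p"
  proof -
    interpret U: prob_space UU by (rule prob_UU)
    have "(\<integral>x. (\<lambda>a s u. if a then 1 else (0::real)) (fst x) (fst (snd x)) (fst (snd (snd x))) \<partial>step_measure p q)
      = p * q * (\<integral>u. (\<lambda>a s u. if a then 1 else (0::real)) True True u \<partial>UU) + p * (1 - q) * (\<integral>u. (\<lambda>a s u. if a then 1 else (0::real)) True False u \<partial>UU)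
        + (1 - p) * q * (\<integral>u. (\<lambda>a s u. if a then 1 else (0::real)) False True u \<partial>UU) + (1 - p) * (1 - q) * (\<integral>u. (\<lambda>a s u. if a then 1 else (0::real)) False False u \<partial>UU)"
      by (rule integral_step3[where B=1]) (use p q in auto)
    then show ?thesis by (simp add: U.prob_space algebra_simps)
  qed
  then show "AE w in cmrt_space p q. (\<integral>x. (if fst ((w(j := x)) j) then 1 else 0) - p \<partial>step_measure p q) = 0"
  proof (intro AE_I2)
    fix w :: "nat \<Rightarrow> step_rand"
    have int: "integrable (step_measure p q) (\<lambda>x. if fst x then 1 else (0::real))"
      by (rule S.M.integrable_const_bound[where B=1]) (use 2 in \<open>auto simp: step_measure_def\<close>)
    have "(\<integral>x. (if fst ((w(j := x)) j) then 1 else 0) - p \<partial>step_measure p q)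
        = (\<integral>x. (if fst x then 1 else 0) - p \<partial>step_measure p q)" by simp
    also have "\<dots> = (\<integral>x. (if fst x then 1 else 0) \<partial>step_measure p q) - (\<integral>x. p \<partial>step_measure p q)"
      by (rule Bochner_Integration.integral_diff[OF int]) simp
    also have "\<dots> = 0" using \<open>(\<integral>x. (if fst x then 1 else 0) \<partial>step_measure p q) = p\<close> by (simp add: S.M.prob_space)
    finally show "(\<integral>x. (if fst ((w(j := x)) j) then 1 else 0) - p \<partial>step_measure p q) = 0" .
  qed
qed

lemma gA_slln: "AE w in cmrt_space p q. (\<lambda>m. (\<Sum>j<m. (if fst (w j) then 1 else 0) - p) / m) \<longlonglongrightarrow> 0"
  unfolding M_eq
proof (rule S.mart_slln[where B=1 and g="\<lambda>j w. (if fst (w j) then 1 else 0) - p"])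
  show "AE w in S.S. (\<integral>x. (if fst ((w(j := x)) j) then 1 else 0) - p \<partial>step_measure p q) = 0" for j
    using gA_props(3)[of j] unfolding M_eq by simp
qed (use gA_props[unfolded M_eq] p in auto)

lemma num_A_init: "num_A cmrt_init = 1" by (simp add: cmrt_init_def num_A_def)

lemma sum_gA: "(\<Sum>j<m. (if fst (w j) then 1 else 0) - p) = real (num_A (cmrt_seq w m)) - 1 - p * real m"
  by (induction m) (simp_all add: num_A_cmrt_add num_A_init algebra_simps)

lemma num_A_lim:
  fixes w :: "nat \<Rightarrow> step_rand"
  assumes "(\<lambda>m. (\<Sum>j<m. (if fst (w j) then 1 else 0) - p) / real m) \<longlonglongrightarrow> 0"
  shows "(\<lambda>m. real (num_A (cmrt_seq w m)) / m) \<longlonglongrightarrow> p"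
proof -
  have "(\<lambda>m. (\<Sum>j<m. (if fst (w j) then 1 else 0) - p) / real m + 1 / real m + p) \<longlonglongrightarrow> 0 + 0 + p"
    by (intro tendsto_add assms tendsto_const lim_const_over_n)
  then have L: "(\<lambda>m. (\<Sum>j<m. (if fst (w j) then 1 else 0) - p) / real m + 1 / real m + p) \<longlonglongrightarrow> p" by simp
  moreover have "(\<Sum>j<m. (if fst (w j) then 1 else 0) - p) / real m + 1 / real m + p = real (num_A (cmrt_seq w m)) / real m"
    if "m \<ge> 1" for m :: nat
    unfolding sum_gA using that by (simp add: field_simps)
  then have "eventually (\<lambda>m. (\<Sum>j<m. (if fst (w j) then 1 else 0) - p) / real m + 1 / real m + p = real (num_A (cmrt_seq w m)) / real m) sequentially"
    unfolding eventually_sequentially by blast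
  then show ?thesis by (rule Lim_transform_eventually[OF L])
qed


lemma gE_props:
  shows "(\<lambda>w. (if 1 < snd (snd (snd (w j))) then 1 else 0) - exp (-1::real)) \<in> borel_measurable (cmrt_space p q)"
    and "\<bar>(if 1 < snd (snd (snd (w j))) then 1 else 0) - exp (-1::real)\<bar> \<le> 1"
    and "AE w in cmrt_space p q. (\<integral>x. (if 1 < snd (snd (snd ((w(j := x)) j))) then 1 else 0) - exp (-1::real) \<partial>step_measure p q) = 0"
proof -
  have 1: "(\<lambda>w. w j) \<in> measurable (cmrt_space p q) (step_measure p q)"
    unfolding cmrt_space_def by (rule measurable_component_singleton) simp
  have 2: "(\<lambda>x. (if 1 < snd (snd (snd x)) then 1 else 0) - exp (-1::real)) \<in> borel_measurable (step_measure p q)"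
    unfolding step_measure_def by measurable
  have 3: "(\<lambda>x. (if 1 < snd (snd (snd x)) then 1 else (0::real))) \<in> borel_measurable (step_measure p q)"
    unfolding step_measure_def by measurable
  show "(\<lambda>w. (if 1 < snd (snd (snd (w j))) then 1 else 0) - exp (-1::real)) \<in> borel_measurable (cmrt_space p q)"
    using measurable_compose[OF 1 2] by simp
  have e1: "exp (-1::real) \<le> 1" by simp
  have e0: "0 < exp (-1::real)" by simp
  show "\<bar>(if 1 < snd (snd (snd (w j))) then 1 else 0) - exp (-1::real)\<bar> \<le> 1"
    using e1 e0 by auto
  show "AE w in cmrt_space p q. (\<integral>x. (if 1 < snd (snd (snd ((w(j := x)) j))) then 1 else 0) - exp (-1::real) \<partial>step_measure p q) = 0"
  proof (intro AE_I2)
    fix w :: "nat \<Rightarrow> step_rand"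
    have int: "integrable (step_measure p q) (\<lambda>x. if 1 < snd (snd (snd x)) then 1 else (0::real))"
      by (rule S.M.integrable_const_bound[where B=1]) (use 3 in auto)
    have "(\<integral>x. (if 1 < snd (snd (snd ((w(j := x)) j))) then 1 else 0) - exp (-1::real) \<partial>step_measure p q)
        = (\<integral>x. (if 1 < snd (snd (snd x)) then 1 else 0) - exp (-1::real) \<partial>step_measure p q)" by simp
    also have "\<dots> = (\<integral>x. (if 1 < snd (snd (snd x)) then 1 else 0) \<partial>step_measure p q) - (\<integral>x. exp (-1::real) \<partial>step_measure p q)"
      by (rule Bochner_Integration.integral_diff[OF int]) simp
    also have "\<dots> = 0" using integral_step_E[of p q] by (simp add: S.M.prob_space)
    finally show "(\<integral>x. (if 1 < snd (snd (snd ((w(j := x)) j))) then 1 else 0) - exp (-1::real) \<partial>step_measure p q) = 0" .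
  qed
qed

lemma gE_slln: "AE w in cmrt_space p q. (\<lambda>m. (\<Sum>j<m. (if 1 < snd (snd (snd (w j))) then 1 else 0) - exp (-1::real)) / real m) \<longlonglongrightarrow> 0"
  unfolding M_eq
proof (rule S.mart_slln[where B=1 and g="\<lambda>j w. (if 1 < snd (snd (snd (w j))) then 1 else 0) - exp (-1::real)"])
  show "AE w in S.S. (\<integral>x. (if 1 < snd (snd (snd ((w(j := x)) j))) then 1 else 0) - exp (-1::real) \<partial>step_measure p q) = 0" for j
    using gE_props(3)[of j] unfolding M_eq by simp
  show "\<And>j. (\<lambda>w. (if 1 < snd (snd (snd (w j))) then 1 else 0) - exp (-1::real)) \<in> borel_measurable S.S"
    using gE_props(1) unfolding M_eq by simp
  show "\<And>j w. \<bar>(if 1 < snd (snd (snd (w j))) then 1 else 0) - exp (-1::real)\<bar> \<le> 1"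
    by (rule gE_props(2))
qed auto

lemma sum_split_ivl: "(n1::nat) \<le> n2 \<Longrightarrow> (\<Sum>j<n2. f j) - (\<Sum>j<n1. f j) = (\<Sum>j\<in>{n1..<n2}. (f j :: real))"
  using sum.atLeastLessThan_concat[of 0 n1 n2 f] by (simp add: lessThan_atLeast0)

lemma jump_unbounded:
  fixes w :: "nat \<Rightarrow> step_rand"
  assumes E0: "\<And>j. 0 \<le> snd (snd (snd (w j)))"
    and lE: "(\<lambda>m. (\<Sum>j<m. (if 1 < snd (snd (snd (w j))) then 1 else 0) - exp (-1::real)) / real m) \<longlonglongrightarrow> 0"
  shows "mono (jump_time p w)" and "\<exists>m. t < jump_time p w (Suc m)"
proof -
  define ind where "ind j = (if 1 < snd (snd (snd (w j))) then 1 else (0::real))" for j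
  define C where "C m = (\<Sum>j<m. ind j)" for m
  define mu where "mu = exp (-1::real)"
  have mu: "0 < mu" unfolding mu_def by simp
  have h0: "0 \<le> hold p w j" for j
    unfolding hold_def using E0[of j] p by simp
  show mono: "mono (jump_time p w)"
    by (rule incseq_SucI) (simp add: jump_time_def h0)
  have hge: "p * ind j / real (j + 2) \<le> hold p w j" for j
  proof -
    have N1: "1 \<le> real (num_A (cmrt_seq w j))" using num_A_seq_ge1[of w j] by simp
    have N2: "real (num_A (cmrt_seq w j)) \<le> real (j + 2)"
      using num_A_le_length[of "cmrt_seq w j"] by (simp add: length_cmrt_seq)
    have ie: "ind j \<le> snd (snd (snd (w j)))" unfolding ind_def using E0[of j] by auto
    have i0: "0 \<le> ind j" unfolding ind_def by simp
    have "p * ind j / real (j + 2) \<le> p * ind j / real (num_A (cmrt_seq w j))"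
      using N1 N2 p i0 by (intro divide_left_mono) auto
    also have "\<dots> \<le> p * snd (snd (snd (w j))) / real (num_A (cmrt_seq w j))"
      using N1 p ie by (intro divide_right_mono mult_left_mono) auto
    finally show ?thesis unfolding hold_def .
  qed
  have lC: "(\<lambda>m. C m / real m) \<longlonglongrightarrow> mu"
  proof -
    have L: "(\<lambda>m. (\<Sum>j<m. ind j - mu) / real m + mu) \<longlonglongrightarrow> 0 + mu"
      using lE unfolding ind_def mu_def by (intro tendsto_add tendsto_const) simp
    have "eventually (\<lambda>m. (\<Sum>j<m. ind j - mu) / real m + mu = C m / real m) sequentially"
      unfolding eventually_sequentially C_def
      by (rule exI[of _ 1]) (auto simp: sum_subtractf field_simps)
    then show ?thesis by (rule Lim_transform_eventually[OF L[simplified]])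
  qed
  obtain M0 where M0: "\<And>m. m \<ge> M0 \<Longrightarrow> \<bar>C m / real m - mu\<bar> < mu / 8"
    using LIMSEQ_D[OF lC, of "mu/8"] mu by auto
  define M where "M = max M0 1"
  define del where "del = p * mu / 8"
  have del: "0 < del" unfolding del_def using p mu by simp
  have step: "del \<le> jump_time p w (2 * m) - jump_time p w m" if m: "m \<ge> M" for m
  proof -
    have m1: "1 \<le> m" "M0 \<le> m" using m unfolding M_def by auto
    have c1: "C m \<le> real m * (mu + mu / 8)"
    proof -
      have "C m / real m < mu + mu / 8" using M0[OF m1(2)] by linarith
      then show ?thesis using m1 by (simp add: field_simps)
    qed
    have c2: "real (2 * m) * (mu - mu / 8) \<le> C (2 * m)"
    proof -
      have "mu - mu / 8 < C (2 * m) / real (2 * m)" using M0[of "2 * m"] m1 by linarith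
      then show ?thesis using m1 by (simp add: field_simps)
    qed
    have "jump_time p w (2 * m) - jump_time p w m = (\<Sum>j\<in>{m..<2*m}. hold p w j)"
      unfolding jump_time_def by (rule sum_split_ivl) simp
    also have "\<dots> \<ge> (\<Sum>j\<in>{m..<2*m}. p * ind j / real (2 * m + 2))"
    proof (rule sum_mono)
      fix j assume j: "j \<in> {m..<2*m}"
      have "p * ind j / real (2 * m + 2) \<le> p * ind j / real (j + 2)"
        using j p unfolding ind_def by (intro divide_left_mono) auto
      then show "p * ind j / real (2 * m + 2) \<le> hold p w j" using hge[of j] by linarith
    qed
    also have "(\<Sum>j\<in>{m..<2*m}. p * ind j / real (2 * m + 2)) = p / real (2 * m + 2) * (C (2 * m) - C m)"
    proof -
      have sp: "sum ind {m..<2*m} = C (2 * m) - C m" using sum_split_ivl[of m "2*m" ind] unfolding C_def by simp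
      have "(\<Sum>j\<in>{m..<2*m}. p * ind j / real (2 * m + 2)) = p * sum ind {m..<2*m} / real (2 * m + 2)"
        by (simp add: sum_divide_distrib[symmetric] sum_distrib_left[symmetric])
      then show ?thesis unfolding sp by simp
    qed
    also have "p / real (2 * m + 2) * (C (2 * m) - C m) \<ge> p / real (2 * m + 2) * (real m * (5 * mu / 8))"
    proof (rule mult_left_mono)
      show "real m * (5 * mu / 8) \<le> C (2 * m) - C m" using c1 c2 by (simp add: algebra_simps)
    qed (use p in simp)
    also have "p / real (2 * m + 2) * (real m * (5 * mu / 8)) \<ge> del"
    proof -
      have "real (2 * m + 2) \<le> 4 * real m" using m1 by simp
      then have "real (2 * m + 2) * (p * mu / 8) \<le> 4 * real m * (p * mu / 8)"
        using p mu by (intro mult_right_mono) auto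
      also have "\<dots> \<le> p * (real m * (5 * mu / 8))" using p mu m1 by (simp add: field_simps)
      finally show ?thesis unfolding del_def using m1 by (simp add: field_simps)
    qed
    finally show ?thesis by linarith
  qed
  have grow: "real i * del \<le> jump_time p w (2 ^ i * M)" for i
  proof (induction i)
    case 0 then show ?case by (simp add: jump_time_def h0 sum_nonneg)
  next
    case (Suc i)
    have "M \<le> 2 ^ i * M" by simp
    then have "del \<le> jump_time p w (2 * (2 ^ i * M)) - jump_time p w (2 ^ i * M)" by (rule step)
    then show ?case using Suc by (simp add: algebra_simps)
  qed
  obtain i :: nat where i: "t / del < real i" using reals_Archimedean2 by blast
  have "t < real i * del" using i del by (simp add: field_simps)
  also have "\<dots> \<le> jump_time p w (2 ^ i * M)" by (rule grow)
  finally have "t < jump_time p w (2 ^ i * M)" .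
  moreover have "2 ^ i * M = Suc (2 ^ i * M - 1)" unfolding M_def by simp
  ultimately show "\<exists>m. t < jump_time p w (Suc m)" by metis
qed

end

lemma conv_prob_at_top:
  fixes X :: "real \<Rightarrow> 'a \<Rightarrow> real"
  assumes M: "prob_space M" and Xm: "\<And>t. X t \<in> borel_measurable M"
    and lim: "AE w in M. ((\<lambda>t. X t w) \<longlongrightarrow> c) at_top" and e: "0 < e"
  shows "((\<lambda>t. measure M {w \<in> space M. \<bar>X t w - c\<bar> > e}) \<longlongrightarrow> 0) at_top"
proof -
  interpret M: prob_space M by (rule M)
  define s :: "real \<Rightarrow> 'a \<Rightarrow> real" where "s t = indicator {w \<in> space M. \<bar>X t w - c\<bar> > e}" for t
  have sm: "s t \<in> borel_measurable M" for t
    unfolding s_def using Xm[of t] by measurable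
  have "((\<lambda>t. integral\<^sup>L M (s t)) \<longlongrightarrow> integral\<^sup>L M (\<lambda>_. 0::real)) at_top"
  proof (rule integral_dominated_convergence_at_top[where w="\<lambda>_. 1"])
    show "AE x in M. ((\<lambda>t. s t x) \<longlongrightarrow> 0) at_top"
      using lim
    proof (rule eventually_mono)
      fix w assume "((\<lambda>t. X t w) \<longlongrightarrow> c) at_top"
      then have "eventually (\<lambda>t. dist (X t w) c < e) at_top" using e by (rule tendstoD)
      then have "eventually (\<lambda>t. s t w = 0) at_top"
        by (rule eventually_mono) (auto simp: s_def dist_real_def)
      then show "((\<lambda>t. s t w) \<longlongrightarrow> 0) at_top" by (rule tendsto_eventually)
    qed
    show "\<forall>\<^sub>F i in at_top. AE x in M. norm (s i x) \<le> 1"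
      by (intro always_eventually allI AE_I2) (simp add: s_def indicator_def)
  qed (use sm in auto)
  moreover have "integral\<^sup>L M (s t) = measure M {w \<in> space M. \<bar>X t w - c\<bar> > e}" for t
    unfolding s_def by (simp add: Int_absorb2)
  ultimately show ?thesis by simp
qed

lemma conv_prob_seq:
  fixes X :: "nat \<Rightarrow> 'a \<Rightarrow> real"
  assumes M: "prob_space M" and Xm: "\<And>t. X t \<in> borel_measurable M"
    and lim: "AE w in M. (\<lambda>t. X t w) \<longlonglongrightarrow> c" and e: "0 < e"
  shows "(\<lambda>t. measure M {w \<in> space M. \<bar>X t w - c\<bar> > e}) \<longlonglongrightarrow> 0"
proof -
  interpret M: prob_space M by (rule M)
  define s :: "nat \<Rightarrow> 'a \<Rightarrow> real" where "s t = indicator {w \<in> space M. \<bar>X t w - c\<bar> > e}" for t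
  have sm: "s t \<in> borel_measurable M" for t
    unfolding s_def using Xm[of t] by measurable
  have "(\<lambda>t. integral\<^sup>L M (s t)) \<longlonglongrightarrow> integral\<^sup>L M (\<lambda>_. 0::real)"
  proof (rule integral_dominated_convergence[where w="\<lambda>_. 1"])
    show "AE x in M. (\<lambda>t. s t x) \<longlonglongrightarrow> 0"
      using lim
    proof (rule eventually_mono)
      fix w assume "(\<lambda>t. X t w) \<longlonglongrightarrow> c"
      then have "eventually (\<lambda>t. dist (X t w) c < e) sequentially" using e by (rule tendstoD)
      then have "eventually (\<lambda>t. s t w = 0) sequentially"
        by (rule eventually_mono) (auto simp: s_def dist_real_def)
      then show "(\<lambda>t. s t w) \<longlonglongrightarrow> 0" by (rule tendsto_eventually)
    qed
    show "AE x in M. norm (s i x) \<le> 1" for i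
      by (intro AE_I2) (simp add: s_def indicator_def)
  qed (use sm in auto)
  moreover have "integral\<^sup>L M (s t) = measure M {w \<in> space M. \<bar>X t w - c\<bar> > e}" for t
    unfolding s_def by (simp add: Int_absorb2)
  ultimately show ?thesis by simp
qed

lemma mt_filterlim:
  fixes J :: "nat \<Rightarrow> real"
  assumes mono: "mono J" and ex: "\<And>t. \<exists>m. t < J (Suc m)"
  shows "filterlim (\<lambda>t. LEAST m. t < J (Suc m)) at_top at_top"
proof (subst filterlim_at_top, intro allI)
  fix Z :: nat
  show "eventually (\<lambda>t. Z \<le> (LEAST m. t < J (Suc m))) at_top"
    using eventually_ge_at_top[of "J Z"]
  proof (rule eventually_mono)
    fix t assume t: "J Z \<le> t"
    show "Z \<le> (LEAST m. t < J (Suc m))"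
    proof (rule ccontr)
      assume "\<not> Z \<le> (LEAST m. t < J (Suc m))"
      then have lt: "Suc (LEAST m. t < J (Suc m)) \<le> Z" by simp
      have "t < J (Suc (LEAST m. t < J (Suc m)))" using ex[of t] by (rule LeastI_ex)
      also have "\<dots> \<le> J Z" using mono lt by (rule monoD)
      finally show False using t by simp
    qed
  qed
qed

context
  fixes p q :: real
  assumes p: "0 < p" "p \<le> 1" and q: "0 \<le> q" "q \<le> 1"
begin

lemma hold_meas[measurable]: "(\<lambda>w. hold p w j) \<in> borel_measurable (cmrt_space p q)"
proof -
  have 1: "(\<lambda>w. w j) \<in> measurable (cmrt_space p q) (step_measure p q)"
    unfolding cmrt_space_def by (rule measurable_component_singleton) simp
  have 2: "(\<lambda>x. snd (snd (snd x))) \<in> borel_measurable (step_measure p q)"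
    unfolding step_measure_def by measurable
  have 3: "(\<lambda>w. snd (snd (snd (w j)))) \<in> borel_measurable (cmrt_space p q)"
    using measurable_compose[OF 1 2] by simp
  have 4: "(\<lambda>w. real (num_A (cmrt_seq w j))) \<in> borel_measurable (cmrt_space p q)"
    using measurable_compose[OF meas_cmrt_seq[of j p q] borel_measurable_count_space[of "\<lambda>T. real (num_A T)" UNIV]]
    by simp
  show ?thesis unfolding hold_def using 3 4 by measurable
qed

lemma jump_meas[measurable]: "(\<lambda>w. jump_time p w m) \<in> borel_measurable (cmrt_space p q)"
  unfolding jump_time_def by measurable

lemma mt_meas: "(\<lambda>w. LEAST m. t < jump_time p w (Suc m)) \<in> measurable (cmrt_space p q) (count_space UNIV)"
  by (rule measurable_Least) measurable

lemma bp_meas: "(\<lambda>w. bp_state p w t) \<in> measurable (cmrt_space p q) (count_space UNIV)"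
  unfolding bp_state_def
  by (rule measurable_compose_countable[where f="\<lambda>m w. cmrt_seq w m", OF _ mt_meas]) measurable

lemma ratio_meas:
  assumes "f \<in> measurable (cmrt_space p q) (count_space UNIV)"
  shows "(\<lambda>w. real (NkA k (f w)) / real (length (f w))) \<in> borel_measurable (cmrt_space p q)"
  using measurable_compose[OF assms borel_measurable_count_space[of "\<lambda>T. real (NkA k T) / real (length T)" UNIV]]
  by simp

lemma ratio_meas2:
  "(\<lambda>w. real (NkA k (cmrt_tree w n)) / real n) \<in> borel_measurable (cmrt_space p q)"
proof -
  have 1: "(\<lambda>w. cmrt_tree w n) \<in> measurable (cmrt_space p q) (count_space UNIV)"
    unfolding cmrt_tree_def by measurable
  show ?thesis
    using measurable_compose[OF 1 borel_measurable_count_space[of "\<lambda>T. real (NkA k T) / real n" UNIV]]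
    by simp
qed

lemma main_ae: "AE w in cmrt_space p q. (\<lambda>m. real (NkA k (cmrt_seq w m)) / real (m + 2)) \<longlonglongrightarrow> pkf p q k
   \<and> (\<forall>t. \<exists>m. t < jump_time p w (Suc m)) \<and> mono (jump_time p w)"
proof -
  have L: "AE w in cmrt_space p q. \<forall>k. (\<lambda>m. (\<Sum>j<m. gL p q k j w) / m) \<longlonglongrightarrow> 0"
    unfolding AE_all_countable using gL_slln[OF p q] by blast
  have "AE w in cmrt_space p q. (\<forall>j. good (cmrt_seq w j) \<and> 0 \<le> snd (snd (snd (w j))))
     \<and> (\<lambda>m. (\<Sum>j<m. (if fst (w j) then 1 else 0) - p) / m) \<longlonglongrightarrow> 0
     \<and> (\<lambda>m. (\<Sum>j<m. (if 1 < snd (snd (snd (w j))) then 1 else 0) - exp (-1::real)) / real m) \<longlonglongrightarrow> 0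
     \<and> (\<forall>k. (\<lambda>m. (\<Sum>j<m. gL p q k j w) / m) \<longlonglongrightarrow> 0)"
    using AE_good[OF p q] gA_slln[OF p q] gE_slln[OF p q] L by eventually_elim auto
  then show ?thesis
  proof (rule eventually_mono)
    fix w :: "nat \<Rightarrow> step_rand"
    assume a: "(\<forall>j. good (cmrt_seq w j) \<and> 0 \<le> snd (snd (snd (w j))))
     \<and> (\<lambda>m. (\<Sum>j<m. (if fst (w j) then 1 else 0) - p) / m) \<longlonglongrightarrow> 0
     \<and> (\<lambda>m. (\<Sum>j<m. (if 1 < snd (snd (snd (w j))) then 1 else 0) - exp (-1::real)) / real m) \<longlonglongrightarrow> 0
     \<and> (\<forall>k. (\<lambda>m. (\<Sum>j<m. gL p q k j w) / m) \<longlonglongrightarrow> 0)"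
    have lN: "(\<lambda>m. real (num_A (cmrt_seq w m)) / m) \<longlonglongrightarrow> p"
      by (rule num_A_lim[OF p q]) (use a in simp)
    have lk: "(\<lambda>m. real (NkA k (cmrt_seq w m)) / m) \<longlonglongrightarrow> pkf p q k"
      by (rule levels[OF p q lN]) (use a in simp)
    have l2: "(\<lambda>m. real m / real (m + 2)) \<longlonglongrightarrow> 1"
    proof -
      have "(\<lambda>m. 2 / real m) \<longlonglongrightarrow> 0" by (rule lim_const_over_n)
      then have "(\<lambda>m. 2 / real (m + 2)) \<longlonglongrightarrow> 0" by (rule LIMSEQ_ignore_initial_segment)
      then have "(\<lambda>m. 1 - 2 / real (m + 2)) \<longlonglongrightarrow> 1 - 0" by (intro tendsto_diff tendsto_const)
      moreover have "1 - 2 / real (m + 2) = real m / real (m + 2)" for m by (simp add: field_simps)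
      ultimately show ?thesis by simp
    qed
    have "(\<lambda>m. real (NkA k (cmrt_seq w m)) / m * (real m / real (m + 2))) \<longlonglongrightarrow> pkf p q k * 1"
      by (intro tendsto_mult lk l2)
    moreover have "eventually (\<lambda>m. real (NkA k (cmrt_seq w m)) / m * (real m / real (m + 2))
        = real (NkA k (cmrt_seq w m)) / real (m + 2)) sequentially"
      unfolding eventually_sequentially by (rule exI[of _ 1]) auto
    ultimately have c1: "(\<lambda>m. real (NkA k (cmrt_seq w m)) / real (m + 2)) \<longlonglongrightarrow> pkf p q k"
      using Lim_transform_eventually by fastforce
    have E0: "\<And>j. 0 \<le> snd (snd (snd (w j)))" using a by blast
    have lE: "(\<lambda>m. (\<Sum>j<m. (if 1 < snd (snd (snd (w j))) then 1 else 0) - exp (-1::real)) / real m) \<longlonglongrightarrow> 0"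
      using a by blast
    show "(\<lambda>m. real (NkA k (cmrt_seq w m)) / real (m + 2)) \<longlonglongrightarrow> pkf p q k
      \<and> (\<forall>t. \<exists>m. t < jump_time p w (Suc m)) \<and> mono (jump_time p w)"
      using c1 jump_unbounded[OF p q E0 lE] by blast
  qed
qed

end

lemma prob_M: "prob_space (cmrt_space p q)"
proof -
  interpret S: sequence_space "step_measure p q" by (rule seq_space)
  show ?thesis unfolding cmrt_space_def by (rule S.P.prob_space_axioms)
qed

theorem theorem5p4:
  fixes p q :: real and k :: nat
  assumes "0 < k" and "0 < p" and "p \<le> 1" and "0 \<le> q" and "q \<le> 1"
  defines "r \<equiv> q + (1 - p) * (1 - q) / p"
  defines "pk \<equiv> p / (1 + r) * (r / (1 + r)) ^ k"
  defines "M \<equiv> cmrt_space p q"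
  shows "pk = p * (LINT s:{0..}|lborel. poisson_prob (r * s) k * exp (- s))
    \<and> (\<forall>t. (\<lambda>w. real (NkA k (bp_state p w t)) / real (length (bp_state p w t)))
               \<in> borel_measurable M)
    \<and> (\<forall>\<epsilon>>0. ((\<lambda>t. measure M {w \<in> space M.
               \<bar>real (NkA k (bp_state p w t)) / real (length (bp_state p w t)) - pk\<bar> > \<epsilon>})
             \<longlongrightarrow> 0) at_top)
    \<and> (\<forall>n. (\<lambda>w. real (NkA k (cmrt_tree w n)) / real n) \<in> borel_measurable M)
    \<and> (\<forall>\<epsilon>>0. ((\<lambda>n. measure M {w \<in> space M.
               \<bar>real (NkA k (cmrt_tree w n)) / real n - pk\<bar> > \<epsilon>})
             \<longlongrightarrow> 0) sequentially)"
proof -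
  have p: "0 < p" "p \<le> 1" and q: "0 \<le> q" "q \<le> 1" using assms by auto
  have r_eq: "r = rho p q / p" unfolding r_def rho_def using p by (simp add: field_simps)
  have r0: "0 \<le> r" unfolding r_eq using rho_bounds[of p q] p q by simp
  have pk_eq: "pk = pkf p q k" unfolding pk_def r_eq pkf_def[OF p q] ..
  have part1: "pk = p * (LINT s:{0..}|lborel. poisson_prob (r * s) k * exp (- s))"
  proof -
    have "1 + r \<noteq> 0" using r0 by simp
    have "p / (1 + r) * (r / (1 + r)) ^ k = p * (r ^ k / (1 + r) ^ Suc k)"
      unfolding power_divide by simp
    then show ?thesis unfolding poisson_integral[OF r0] pk_def .
  qed
  have meas1: "(\<lambda>w. real (NkA k (bp_state p w t)) / real (length (bp_state p w t))) \<in> borel_measurable M" for t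
    unfolding M_def by (rule ratio_meas[OF p q bp_meas[OF p q]])
  have meas2: "(\<lambda>w. real (NkA k (cmrt_tree w n)) / real n) \<in> borel_measurable M" for n
    unfolding M_def by (rule ratio_meas2[OF p q])
  have PM: "prob_space M" unfolding M_def by (rule prob_M)
  have ae: "AE w in M. (\<lambda>m. real (NkA k (cmrt_seq w m)) / real (m + 2)) \<longlonglongrightarrow> pk
     \<and> (\<forall>t. \<exists>m. t < jump_time p w (Suc m)) \<and> mono (jump_time p w)"
    unfolding M_def pk_eq by (rule main_ae[OF p q])
  have lim1: "AE w in M. ((\<lambda>t. real (NkA k (bp_state p w t)) / real (length (bp_state p w t))) \<longlongrightarrow> pk) at_top"
    using ae
  proof (rule eventually_mono)
    fix w assume a: "(\<lambda>m. real (NkA k (cmrt_seq w m)) / real (m + 2)) \<longlonglongrightarrow> pk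
     \<and> (\<forall>t. \<exists>m. t < jump_time p w (Suc m)) \<and> mono (jump_time p w)"
    have f: "filterlim (\<lambda>t. LEAST m. t < jump_time p w (Suc m)) at_top at_top"
      using a by (intro mt_filterlim) auto
    have "((\<lambda>t. (\<lambda>m. real (NkA k (cmrt_seq w m)) / real (m + 2)) (LEAST m. t < jump_time p w (Suc m))) \<longlongrightarrow> pk) at_top"
    proof (rule filterlim_compose[of "\<lambda>m. real (NkA k (cmrt_seq w m)) / real (m + 2)"])
      show "((\<lambda>m. real (NkA k (cmrt_seq w m)) / real (m + 2)) \<longlongrightarrow> pk) sequentially" using a by blast
    qed (rule f)
    then show "((\<lambda>t. real (NkA k (bp_state p w t)) / real (length (bp_state p w t))) \<longlongrightarrow> pk) at_top"
      unfolding bp_state_def length_cmrt_seq by simp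
  qed
  have lim2: "AE w in M. (\<lambda>n. real (NkA k (cmrt_tree w n)) / real n) \<longlonglongrightarrow> pk"
    using ae
  proof (rule eventually_mono)
    fix w assume a: "(\<lambda>m. real (NkA k (cmrt_seq w m)) / real (m + 2)) \<longlonglongrightarrow> pk
     \<and> (\<forall>t. \<exists>m. t < jump_time p w (Suc m)) \<and> mono (jump_time p w)"
    have "(\<lambda>n. real (NkA k (cmrt_tree w (n + 2))) / real (n + 2)) \<longlonglongrightarrow> pk"
      using a unfolding cmrt_tree_def by simp
    then show "(\<lambda>n. real (NkA k (cmrt_tree w n)) / real n) \<longlonglongrightarrow> pk"
      by (rule LIMSEQ_offset)
  qed
  show ?thesis
  proof (intro conjI allI impI)
    show "pk = p * (LINT s:{0..}|lborel. poisson_prob (r * s) k * exp (- s))" by (rule part1)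
    show "(\<lambda>w. real (NkA k (bp_state p w t)) / real (length (bp_state p w t))) \<in> borel_measurable M" for t
      by (rule meas1)
    show "(\<lambda>w. real (NkA k (cmrt_tree w n)) / real n) \<in> borel_measurable M" for n
      by (rule meas2)
    show "((\<lambda>t. measure M {w \<in> space M.
               \<bar>real (NkA k (bp_state p w t)) / real (length (bp_state p w t)) - pk\<bar> > \<epsilon>}) \<longlongrightarrow> 0) at_top"
      if "\<epsilon> > 0" for \<epsilon>
      by (rule conv_prob_at_top[OF PM meas1 lim1 that])
    show "((\<lambda>n. measure M {w \<in> space M.
               \<bar>real (NkA k (cmrt_tree w n)) / real n - pk\<bar> > \<epsilon>}) \<longlongrightarrow> 0) sequentially"
      if "\<epsilon> > 0" for \<epsilon>
      by (rule conv_prob_seq[OF PM meas2 lim2 that])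
  qed
qed

end
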